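(* Let $T$ be a complete $L$-theory with monster model $\mathcal U$; identify $\phi(a,b)$ with $1$ if it holds and $0$ otherwise. Then $T$ is stable if and only if both of the following hold: (i) for every formula $\phi(x,y)$ and every sequence $(a_i:i<\omega)$ in $\mathcal U$ there are a subsequence $(a_{j_i}:i<\omega)$ and a natural number $N$ such that the sequence $\phi(a_{j_i},y)$ converges pointwise to a function $f$ and $\sum_{i=1}^\infty|\phi(a_{j_i},b)-\phi(a_{j_{i+1}},b)|\le N$ for every $b\in\mathcal U$; (ii) for every formula $\phi(x,y)$ and every sequence $(a_i:i<\omega)$ in $\mathcal U$, if the sequence $\phi(a_i,y)$ converges pointwise to a function $f$ and there is a natural number $N$ with $\sum_{i=1}^\infty|\phi(a_i,b)-\phi(a_{i+1},b)|\le N$ for every $b\in\mathcal U$, then $f$ is continuous.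
   Context: $T$ is stable if no formula $\phi(x,y)$ has the order property, i.e. there are no sequences $(a_i),(b_j)$ in $\mathcal U$ with $\phi(a_i,b_j)\iff i<j$. The functions $\phi(a_i,y)$ are regarded as continuous $\{0,1\}$-valued functions on the Stone space $S_{\tilde\phi}(\{a_i:i<\omega\})$ of complete $\tilde\phi$-types over $\{a_i:i<\omega\}$ (where $\tilde\phi(y,x)=\phi(x,y)$), sending a type $q$ to $1$ iff $\phi(a_i,y)\in q$; convergence and continuity of $f$ refer to this space. *)

theory Defs
  imports "HOL-Analysis.Analysis"
begin

datatype 'f trm = Var nat | Fn 'f "'f trm list"

datatype ('f, 'r) fm =
    Eq "'f trm" "'f trm"
  | Rel 'r "'f trm list"
  | Neg "('f, 'r) fm"
  | Conj "('f, 'r) fm" "('f, 'r) fm"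
  | Ex nat "('f, 'r) fm"

fun fvt :: "'f trm \<Rightarrow> nat set" where
  "fvt (Var n) = {n}"
| "fvt (Fn f ts) = (\<Union>t\<in>set ts. fvt t)"

fun fv :: "('f, 'r) fm \<Rightarrow> nat set" where
  "fv (Eq t s) = fvt t \<union> fvt s"
| "fv (Rel r ts) = (\<Union>t\<in>set ts. fvt t)"
| "fv (Neg \<phi>) = fv \<phi>"
| "fv (Conj \<phi> \<psi>) = fv \<phi> \<union> fv \<psi>"
| "fv (Ex n \<phi>) = fv \<phi> - {n}"

fun evalt :: "('f \<Rightarrow> 'u list \<Rightarrow> 'u) \<Rightarrow> (nat \<Rightarrow> 'u) \<Rightarrow> 'f trm \<Rightarrow> 'u" where
  "evalt F e (Var n) = e n"
| "evalt F e (Fn f ts) = F f (map (evalt F e) ts)"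

fun sat :: "'u set \<Rightarrow> ('f \<Rightarrow> 'u list \<Rightarrow> 'u) \<Rightarrow> ('r \<Rightarrow> 'u list \<Rightarrow> bool)
            \<Rightarrow> (nat \<Rightarrow> 'u) \<Rightarrow> ('f, 'r) fm \<Rightarrow> bool" where
  "sat U F R e (Eq t s) = (evalt F e t = evalt F e s)"
| "sat U F R e (Rel r ts) = R r (map (evalt F e) ts)"
| "sat U F R e (Neg \<phi>) = (\<not> sat U F R e \<phi>)"
| "sat U F R e (Conj \<phi> \<psi>) = (sat U F R e \<phi> \<and> sat U F R e \<psi>)"
| "sat U F R e (Ex n \<phi>) = (\<exists>a\<in>U. sat U F R (e(n := a)) \<phi>)"

definition is_structure :: "'u set \<Rightarrow> ('f \<Rightarrow> 'u list \<Rightarrow> 'u) \<Rightarrow> bool" where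
  "is_structure U F \<longleftrightarrow> U \<noteq> {} \<and> (\<forall>f as. set as \<subseteq> U \<longrightarrow> F f as \<in> U)"

definition sentence :: "('f, 'r) fm \<Rightarrow> bool" where
  "sentence \<phi> \<longleftrightarrow> fv \<phi> = {}"

definition is_model :: "'u set \<Rightarrow> ('f \<Rightarrow> 'u list \<Rightarrow> 'u) \<Rightarrow> ('r \<Rightarrow> 'u list \<Rightarrow> bool)
                        \<Rightarrow> ('f, 'r) fm set \<Rightarrow> bool" where
  "is_model U F R T \<longleftrightarrow> is_structure U F \<and>
     (\<forall>\<sigma>\<in>T. sentence \<sigma> \<and> (\<forall>e. range e \<subseteq> U \<longrightarrow> sat U F R e \<sigma>))"

definition complete_theory :: "('f, 'r) fm set \<Rightarrow> bool" where
  "complete_theory T \<longleftrightarrow> (\<forall>\<sigma>\<in>T. sentence \<sigma>) \<and>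
     (\<forall>\<sigma>. sentence \<sigma> \<longrightarrow> \<sigma> \<in> T \<or> Neg \<sigma> \<in> T) \<and>
     \<not> (\<exists>\<sigma>. \<sigma> \<in> T \<and> Neg \<sigma> \<in> T)"

text \<open>Evaluating a formula at a tuple of parameters: variable i receives the i-th
  entry of the list (other variables receive a fixed default element of U).\<close>
definition env :: "'u set \<Rightarrow> 'u list \<Rightarrow> nat \<Rightarrow> 'u" where
  "env U ps = (\<lambda>i. if i < length ps then ps ! i else (SOME u. u \<in> U))"

definition holds :: "'u set \<Rightarrow> ('f \<Rightarrow> 'u list \<Rightarrow> 'u) \<Rightarrow> ('r \<Rightarrow> 'u list \<Rightarrow> bool)
                     \<Rightarrow> ('f, 'r) fm \<Rightarrow> 'u list \<Rightarrow> bool" where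
  "holds U F R \<phi> ps = sat U F R (env U ps) \<phi>"

text \<open>Monster model of T: a model of T which is kappa-saturated for
  kappa = (|L| + aleph_0)^+: every finitely satisfiable 1-type over a parameter set A
  of size at most |L| + aleph_0 is realized. A 1-type over A is a set of pairs
  (psi, ps) standing for psi(x, ps), with x = variable 0 and ps (from A) assigned to
  variables 1, ..., length ps.\<close>
definition monster :: "'u set \<Rightarrow> ('f \<Rightarrow> 'u list \<Rightarrow> 'u) \<Rightarrow> ('r \<Rightarrow> 'u list \<Rightarrow> bool)
                       \<Rightarrow> ('f, 'r) fm set \<Rightarrow> bool" where
  "monster U F R T \<longleftrightarrow> is_model U F R T \<and>
     (\<forall>A \<Sigma>. A \<subseteq> U \<and> (\<exists>g :: 'f + 'r + nat \<Rightarrow> 'u. A \<subseteq> range g)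
        \<and> \<Sigma> \<subseteq> {(\<psi>, ps). set ps \<subseteq> A \<and> fv \<psi> \<subseteq> {..< Suc (length ps)}}
        \<and> (\<forall>\<Sigma>0 \<subseteq> \<Sigma>. finite \<Sigma>0 \<longrightarrow> (\<exists>c\<in>U. \<forall>(\<psi>, ps)\<in>\<Sigma>0. holds U F R \<psi> (c # ps)))
      \<longrightarrow> (\<exists>c\<in>U. \<forall>(\<psi>, ps)\<in>\<Sigma>. holds U F R \<psi> (c # ps)))"

text \<open>A formula phi(x,y) with |x| = n, |y| = m is a formula with free variables among
  0..n+m-1, where x = (0..n-1) and y = (n..n+m-1); phi(a,b) is holds phi (a @ b).\<close>
definition order_property :: "'u set \<Rightarrow> ('f \<Rightarrow> 'u list \<Rightarrow> 'u) \<Rightarrow> ('r \<Rightarrow> 'u list \<Rightarrow> bool)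
                              \<Rightarrow> ('f, 'r) fm \<Rightarrow> nat \<Rightarrow> nat \<Rightarrow> bool" where
  "order_property U F R \<phi> n m \<longleftrightarrow>
     (\<exists>a b :: nat \<Rightarrow> 'u list.
        (\<forall>i. set (a i) \<subseteq> U \<and> length (a i) = n) \<and>
        (\<forall>j. set (b j) \<subseteq> U \<and> length (b j) = m) \<and>
        (\<forall>i j. holds U F R \<phi> (a i @ b j) \<longleftrightarrow> i < j))"

definition stable :: "'u set \<Rightarrow> ('f \<Rightarrow> 'u list \<Rightarrow> 'u) \<Rightarrow> ('r \<Rightarrow> 'u list \<Rightarrow> bool) \<Rightarrow> bool" where
  "stable U F R \<longleftrightarrow>
     \<not> (\<exists>\<phi> n m. fv \<phi> \<subseteq> {..< n + m} \<and> order_property U F R \<phi> n m)"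

text \<open>A complete phi~-type q over {a_i} is represented by the function
  i \<mapsto> [phi(a_i, y) \<in> q]; these are exactly the functions all of whose finite
  restrictions are realized in U.\<close>
definition phi_types :: "'u set \<Rightarrow> ('f \<Rightarrow> 'u list \<Rightarrow> 'u) \<Rightarrow> ('r \<Rightarrow> 'u list \<Rightarrow> bool)
                         \<Rightarrow> ('f, 'r) fm \<Rightarrow> nat \<Rightarrow> (nat \<Rightarrow> 'u list) \<Rightarrow> (nat \<Rightarrow> bool) set" where
  "phi_types U F R \<phi> m a = {p. \<forall>I. finite I \<longrightarrow>
      (\<exists>b. set b \<subseteq> U \<and> length b = m \<and> (\<forall>i\<in>I. holds U F R \<phi> (a i @ b) = p i))}"

definition stone_top :: "'u set \<Rightarrow> ('f \<Rightarrow> 'u list \<Rightarrow> 'u) \<Rightarrow> ('r \<Rightarrow> 'u list \<Rightarrow> bool)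
                         \<Rightarrow> ('f, 'r) fm \<Rightarrow> nat \<Rightarrow> (nat \<Rightarrow> 'u list) \<Rightarrow> (nat \<Rightarrow> bool) topology" where
  "stone_top U F R \<phi> m a =
     subtopology (product_topology (\<lambda>_. discrete_topology UNIV) UNIV) (phi_types U F R \<phi> m a)"

end

theory Submission
  imports Defs "HOL-Library.Ramsey"
begin

fun rent :: "(nat \<Rightarrow> nat) \<Rightarrow> 'f trm \<Rightarrow> 'f trm" where
  "rent \<pi> (Var n) = Var (\<pi> n)"
| "rent \<pi> (Fn f ts) = Fn f (map (rent \<pi>) ts)"

fun ren :: "(nat \<Rightarrow> nat) \<Rightarrow> ('f,'r) fm \<Rightarrow> ('f,'r) fm" where
  "ren \<pi> (Eq t s) = Eq (rent \<pi> t) (rent \<pi> s)"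
| "ren \<pi> (Rel r ts) = Rel r (map (rent \<pi>) ts)"
| "ren \<pi> (Neg \<phi>) = Neg (ren \<pi> \<phi>)"
| "ren \<pi> (Conj \<phi> \<psi>) = Conj (ren \<pi> \<phi>) (ren \<pi> \<psi>)"
| "ren \<pi> (Ex n \<phi>) = Ex (\<pi> n) (ren \<pi> \<phi>)"

lemma evalt_rent: "evalt F e (rent \<pi> t) = evalt F (e \<circ> \<pi>) t"
  by (induction t) (auto cong: map_cong)

lemma sat_ren: "inj \<pi> \<Longrightarrow> sat U F R e (ren \<pi> \<phi>) = sat U F R (e \<circ> \<pi>) \<phi>"
proof (induction \<phi> arbitrary: e)
  case (Ex n \<phi>)
  have "\<And>a. (e(\<pi> n := a)) \<circ> \<pi> = (e \<circ> \<pi>)(n := a)"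
    using Ex.prems by (auto simp: fun_eq_iff inj_eq)
  then show ?case by (simp only: ren.simps sat.simps Ex.IH[OF Ex.prems])
qed (auto simp: evalt_rent comp_def)

lemma evalt_cong: "(\<forall>u\<in>fvt t. e u = e' u) \<Longrightarrow> evalt F e t = evalt F e' t"
  by (induction t) (auto cong: map_cong)

lemma sat_cong: "(\<forall>u\<in>fv \<phi>. e u = e' u) \<Longrightarrow> sat U F R e \<phi> = sat U F R e' \<phi>"
proof (induction \<phi> arbitrary: e e')
  case (Eq t s)
  then show ?case using evalt_cong[of t e e' F] evalt_cong[of s e e' F] by simp
next
  case (Rel r ts)
  then have "map (evalt F e) ts = map (evalt F e') ts"
    by (auto intro!: evalt_cong)
  then show ?case by (simp only: sat.simps)
next
  case (Ex n \<phi>)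
  have "\<And>a. sat U F R (e(n := a)) \<phi> = sat U F R (e'(n := a)) \<phi>"
    by (rule Ex.IH) (use Ex.prems in auto)
  then show ?case by simp
next
  case (Conj \<phi>1 \<phi>2)
  then have "sat U F R e \<phi>1 = sat U F R e' \<phi>1" "sat U F R e \<phi>2 = sat U F R e' \<phi>2"
    by auto
  then show ?case by simp
qed auto

lemma finite_fvt: "finite (fvt t)"
  by (induction t) auto

lemma finite_fv: "finite (fv \<phi>)"
  by (induction \<phi>) (auto simp: finite_fvt)

definition X :: "nat \<Rightarrow> nat \<Rightarrow> nat" where "X i c = 3 * prod_encode (i, c)"
definition Y :: "nat \<Rightarrow> nat \<Rightarrow> nat" where "Y j c = 3 * prod_encode (j, c) + 1"
definition sg :: "nat \<Rightarrow> nat \<Rightarrow> nat \<Rightarrow> nat \<Rightarrow> nat \<Rightarrow> nat" where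
  "sg n m i j u = (if u < n then X i u else if u < n + m then Y j (u - n) else 3 * u + 2)"
definition plug :: "(nat \<Rightarrow> 'u) \<Rightarrow> (nat \<Rightarrow> 'u list) \<Rightarrow> (nat \<Rightarrow> 'u list) \<Rightarrow> nat \<Rightarrow> 'u" where
  "plug E a b u = (let i = fst (prod_decode (u div 3)); c = snd (prod_decode (u div 3)) in
     if u mod 3 = 0 \<and> c < length (a i) then a i ! c
     else if u mod 3 = 1 \<and> c < length (b i) then b i ! c else E u)"

lemma mod3_ne: "3 * (a::nat) \<noteq> Suc (Suc (3 * b))" "3 * (a::nat) \<noteq> Suc (3 * b)"
  "Suc (3 * (a::nat)) \<noteq> Suc (Suc (3 * b))"
  by presburger+

lemma X_inj: "X i c = X i' c' \<longleftrightarrow> i = i' \<and> c = c'"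
  unfolding X_def by (auto simp: prod_encode_eq)

lemma Y_inj: "Y i c = Y i' c' \<longleftrightarrow> i = i' \<and> c = c'"
  unfolding Y_def by (auto simp: prod_encode_eq)

lemma X_neq_Y: "X i c \<noteq> Y j c'"
  unfolding X_def Y_def by presburger

lemma X_mod: "X i c mod 3 = 0" and X_div: "X i c div 3 = prod_encode (i, c)"
  unfolding X_def by auto

lemma Y_mod: "Y i c mod 3 = 1" and Y_div: "Y i c div 3 = prod_encode (i, c)"
  unfolding Y_def by auto

lemma plug_X: "c < length (a i) \<Longrightarrow> plug E a b (X i c) = a i ! c"
  unfolding plug_def Let_def by (simp add: X_mod X_div)

lemma plug_Y: "c < length (b j) \<Longrightarrow> plug E a b (Y j c) = b j ! c"
  unfolding plug_def Let_def by (simp add: Y_mod Y_div)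

lemma plug_other:
  assumes "\<And>i c. c < length (a i) \<Longrightarrow> u \<noteq> X i c" "\<And>j c. c < length (b j) \<Longrightarrow> u \<noteq> Y j c"
  shows "plug E a b u = E u"
proof -
  define i where "i = fst (prod_decode (u div 3))"
  define c where "c = snd (prod_decode (u div 3))"
  have pe: "prod_encode (i, c) = u div 3" unfolding i_def c_def by (simp add: prod_decode_inverse)
  have 1: "\<not> (u mod 3 = 0 \<and> c < length (a i))"
  proof
    assume h: "u mod 3 = 0 \<and> c < length (a i)"
    then have "u = X i c" unfolding X_def pe by presburger
    then show False using assms(1) h by blast
  qed
  have 2: "\<not> (u mod 3 = 1 \<and> c < length (b i))"
  proof
    assume h: "u mod 3 = 1 \<and> c < length (b i)"
    then have "u = Y i c" unfolding Y_def pe by presburger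
    then show False using assms(2) h by blast
  qed
  show ?thesis using 1 2 unfolding plug_def Let_def i_def c_def by auto
qed

lemma plug_range:
  assumes "range E \<subseteq> U" "\<And>i. set (a i) \<subseteq> U" "\<And>j. set (b j) \<subseteq> U"
  shows "range (plug E a b) \<subseteq> U"
proof
  fix x assume "x \<in> range (plug E a b)"
  then obtain u where u: "x = plug E a b u" by blast
  show "x \<in> U" using assms unfolding u plug_def Let_def
    by (auto intro: nth_mem[THEN subsetD[OF assms(2)]] nth_mem[THEN subsetD[OF assms(3)]])
qed

lemma inj_sg: "inj (sg n m i j)"
proof (rule injI)
  fix u v assume h: "sg n m i j u = sg n m i j v"
  show "u = v"
  proof (cases "u < n")
    case True
    then show ?thesis using h unfolding sg_def
      by (auto simp: X_inj X_neq_Y split: if_splits) (auto simp: X_def mod3_ne)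
  next
    case False
    then show ?thesis using h unfolding sg_def
      by (auto simp: X_inj Y_inj X_neq_Y X_neq_Y[symmetric] split: if_splits) (auto simp: X_def Y_def mod3_ne mod3_ne[symmetric])
  qed
qed

lemma sat_sg:
  assumes "fv \<phi> \<subseteq> {..<n+m}" "length as = n" "length bs = m"
    "\<And>c. c < n \<Longrightarrow> E (X i c) = as ! c" "\<And>c. c < m \<Longrightarrow> E (Y j c) = bs ! c"
  shows "sat U F R (E \<circ> sg n m i j) \<phi> = holds U F R \<phi> (as @ bs)"
  unfolding holds_def
proof (rule sat_cong, rule ballI)
  fix u assume "u \<in> fv \<phi>"
  then have u: "u < n + m" using assms(1) by auto
  show "(E \<circ> sg n m i j) u = env U (as @ bs) u"
  proof (cases "u < n")
    case True
    then show ?thesis using assms(2,3,4) u by (simp add: sg_def env_def nth_append)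
  next
    case False
    then show ?thesis using assms(2,3,5) u by (simp add: sg_def env_def nth_append)
  qed
qed

locale mon =
  fixes U :: "'u set" and F :: "'f \<Rightarrow> 'u list \<Rightarrow> 'u" and R :: "'r \<Rightarrow> 'u list \<Rightarrow> bool"
    and T :: "('f, 'r) fm set"
  assumes mon: "monster U F R T"
begin

definition dfn :: "((nat \<Rightarrow> 'u) \<Rightarrow> bool) \<Rightarrow> bool" where
  "dfn Q \<longleftrightarrow> (\<exists>\<theta>. \<forall>E. range E \<subseteq> U \<longrightarrow> (sat U F R E \<theta> \<longleftrightarrow> Q E))"

lemma Une: "U \<noteq> {}"
  using mon unfolding monster_def is_model_def is_structure_def by auto

lemma dfn_sat: "dfn (\<lambda>E. sat U F R E \<theta>)"
  unfolding dfn_def by blast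

lemma dfn_cong: "dfn P \<Longrightarrow> (\<And>E. range E \<subseteq> U \<Longrightarrow> P E \<longleftrightarrow> Q E) \<Longrightarrow> dfn Q"
  unfolding dfn_def by (elim exE) (rule exI, blast)

lemma dfn_not: "dfn P \<Longrightarrow> dfn (\<lambda>E. \<not> P E)"
  unfolding dfn_def by (elim exE) (rule exI[of _ "Neg _"], simp)

lemma dfn_conj: "dfn P \<Longrightarrow> dfn Q \<Longrightarrow> dfn (\<lambda>E. P E \<and> Q E)"
proof -
  assume "dfn P" "dfn Q"
  then obtain \<theta> \<theta>' where "\<forall>E. range E \<subseteq> U \<longrightarrow> (sat U F R E \<theta> \<longleftrightarrow> P E)"
    "\<forall>E. range E \<subseteq> U \<longrightarrow> (sat U F R E \<theta>' \<longleftrightarrow> Q E)" unfolding dfn_def by blast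
  then show ?thesis unfolding dfn_def by (intro exI[of _ "Conj \<theta> \<theta>'"]) simp
qed

lemma dfn_true: "dfn (\<lambda>E. True)"
  unfolding dfn_def by (rule exI[of _ "Eq (Var 0) (Var 0)"]) simp

lemma dfn_if: "dfn P \<Longrightarrow> dfn (\<lambda>E. P E \<longleftrightarrow> b)"
  by (cases b) (auto intro: dfn_cong[OF dfn_not])

lemma dfn_ball: "finite I \<Longrightarrow> (\<forall>i\<in>I. dfn (Q i)) \<Longrightarrow> dfn (\<lambda>E. \<forall>i\<in>I. Q i E)"
proof (induction I rule: finite_induct)
  case empty
  then show ?case using dfn_true by simp
next
  case (insert x I)
  then have "dfn (\<lambda>E. Q x E \<and> (\<forall>i\<in>I. Q i E))" by (intro dfn_conj) auto
  then show ?case by simp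
qed

lemma dfn_comp: "inj \<pi> \<Longrightarrow> dfn Q \<Longrightarrow> dfn (\<lambda>E. Q (E \<circ> \<pi>))"
proof -
  assume i: "inj \<pi>" and "dfn Q"
  then obtain \<theta> where th: "\<forall>E. range E \<subseteq> U \<longrightarrow> (sat U F R E \<theta> \<longleftrightarrow> Q E)"
    unfolding dfn_def by blast
  have "\<forall>E. range E \<subseteq> U \<longrightarrow> (sat U F R E (ren \<pi> \<theta>) \<longleftrightarrow> Q (E \<circ> \<pi>))"
  proof (intro allI impI)
    fix E :: "nat \<Rightarrow> 'u" assume "range E \<subseteq> U"
    then have "range (E \<circ> \<pi>) \<subseteq> U" by auto
    have "sat U F R E (ren \<pi> \<theta>) = sat U F R (E \<circ> \<pi>) \<theta>" by (rule sat_ren[OF i])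
    also have "\<dots> = Q (E \<circ> \<pi>)" using th \<open>range (E \<circ> \<pi>) \<subseteq> U\<close> by blast
    finally show "sat U F R E (ren \<pi> \<theta>) \<longleftrightarrow> Q (E \<circ> \<pi>)" .
  qed
  then show ?thesis unfolding dfn_def by blast
qed

lemma dfn_ex1: "dfn Q \<Longrightarrow> dfn (\<lambda>E. \<exists>c\<in>U. Q (E(v := c)))"
proof -
  assume "dfn Q"
  then obtain \<theta> where th: "\<forall>E. range E \<subseteq> U \<longrightarrow> (sat U F R E \<theta> \<longleftrightarrow> Q E)"
    unfolding dfn_def by blast
  have "\<forall>E. range E \<subseteq> U \<longrightarrow> (sat U F R E (Ex v \<theta>) \<longleftrightarrow> (\<exists>c\<in>U. Q (E(v := c))))"
  proof (intro allI impI)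
    fix E :: "nat \<Rightarrow> 'u" assume "range E \<subseteq> U"
    then have "\<And>c. c \<in> U \<Longrightarrow> range (E(v := c)) \<subseteq> U" by (auto simp: image_subset_iff)
    then show "sat U F R E (Ex v \<theta>) \<longleftrightarrow> (\<exists>c\<in>U. Q (E(v := c)))" using th by auto
  qed
  then show ?thesis unfolding dfn_def by blast
qed

lemma dfn_exW: "finite W \<Longrightarrow> dfn Q \<Longrightarrow>
   dfn (\<lambda>E. \<exists>E'. range E' \<subseteq> U \<and> (\<forall>u. u \<notin> W \<longrightarrow> E' u = E u) \<and> Q E')"
proof (induction W rule: finite_induct)
  case empty
  show ?case
  proof (rule dfn_cong[OF empty])
    fix E :: "nat \<Rightarrow> 'u" assume "range E \<subseteq> U"
    show "Q E \<longleftrightarrow> (\<exists>E'. range E' \<subseteq> U \<and> (\<forall>u. u \<notin> {} \<longrightarrow> E' u = E u) \<and> Q E')"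
    proof
      assume "Q E" with \<open>range E \<subseteq> U\<close> show "\<exists>E'. range E' \<subseteq> U \<and> (\<forall>u. u \<notin> {} \<longrightarrow> E' u = E u) \<and> Q E'"
        by blast
    next
      assume "\<exists>E'. range E' \<subseteq> U \<and> (\<forall>u. u \<notin> {} \<longrightarrow> E' u = E u) \<and> Q E'"
      then obtain E' where "\<forall>u. E' u = E u" "Q E'" by blast
      then have "E' = E" by (simp add: fun_eq_iff)
      with \<open>Q E'\<close> show "Q E" by simp
    qed
  qed
next
  case (insert w W)
  have "dfn (\<lambda>E. \<exists>c\<in>U. (\<lambda>E. \<exists>E'. range E' \<subseteq> U \<and> (\<forall>u. u \<notin> W \<longrightarrow> E' u = E u) \<and> Q E') (E(w := c)))"
    by (rule dfn_ex1) (use insert in auto)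
  then show ?case
  proof (rule dfn_cong)
    fix E :: "nat \<Rightarrow> 'u" assume E: "range E \<subseteq> U"
    show "(\<exists>c\<in>U. \<exists>E'. range E' \<subseteq> U \<and> (\<forall>u. u \<notin> W \<longrightarrow> E' u = (E(w := c)) u) \<and> Q E') \<longleftrightarrow>
      (\<exists>E'. range E' \<subseteq> U \<and> (\<forall>u. u \<notin> insert w W \<longrightarrow> E' u = E u) \<and> Q E')"
    proof
      assume "\<exists>c\<in>U. \<exists>E'. range E' \<subseteq> U \<and> (\<forall>u. u \<notin> W \<longrightarrow> E' u = (E(w := c)) u) \<and> Q E'"
      then obtain c E' where "c \<in> U" "range E' \<subseteq> U" "\<forall>u. u \<notin> W \<longrightarrow> E' u = (E(w := c)) u" "Q E'"
        by blast
      then have "\<forall>u. u \<notin> insert w W \<longrightarrow> E' u = E u" by auto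
      with \<open>range E' \<subseteq> U\<close> \<open>Q E'\<close>
      show "\<exists>E'. range E' \<subseteq> U \<and> (\<forall>u. u \<notin> insert w W \<longrightarrow> E' u = E u) \<and> Q E'"
        by blast
    next
      assume "\<exists>E'. range E' \<subseteq> U \<and> (\<forall>u. u \<notin> insert w W \<longrightarrow> E' u = E u) \<and> Q E'"
      then obtain E' where "range E' \<subseteq> U" "\<forall>u. u \<notin> insert w W \<longrightarrow> E' u = E u" "Q E'" by blast
      moreover have "\<forall>u. u \<notin> W \<longrightarrow> E' u = (E(w := E' w)) u"
        using \<open>\<forall>u. u \<notin> insert w W \<longrightarrow> E' u = E u\<close> by simp
      moreover have "E' w \<in> U" using \<open>range E' \<subseteq> U\<close> by auto
      ultimately show "\<exists>c\<in>U. \<exists>E'. range E' \<subseteq> U \<and> (\<forall>u. u \<notin> W \<longrightarrow> E' u = (E(w := c)) u) \<and> Q E'"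
        by blast
    qed
  qed
qed

lemma onevar:
  assumes E: "range E \<subseteq> U" and D: "\<forall>S\<in>SS. dfn S"
    and fs: "\<forall>S0\<subseteq>SS. finite S0 \<longrightarrow> (\<exists>c\<in>U. \<forall>S\<in>S0. S (E(v:=c)))"
  shows "\<exists>c\<in>U. \<forall>S\<in>SS. S (E(v:=c))"
proof -
  define \<pi> where "\<pi> = (\<lambda>u::nat. if u = v then 0 else if u = 0 then v else u)"
  have pp: "\<pi> (\<pi> u) = u" for u unfolding \<pi>_def by auto
  have inj: "inj \<pi>" by (metis pp injI)
  define th0 where "th0 S = (SOME \<theta>. \<forall>E. range E \<subseteq> U \<longrightarrow> (sat U F R E \<theta> \<longleftrightarrow> S E))" for S
  have th0: "\<forall>E. range E \<subseteq> U \<longrightarrow> (sat U F R E (th0 S) \<longleftrightarrow> S E)" if "S \<in> SS" for S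
  proof -
    have "\<exists>\<theta>. \<forall>E. range E \<subseteq> U \<longrightarrow> (sat U F R E \<theta> \<longleftrightarrow> S E)"
      using D that unfolding dfn_def by blast
    then show ?thesis unfolding th0_def by (rule someI_ex)
  qed
  define th where "th S = ren \<pi> (th0 S)" for S
  define E0 where "E0 = E \<circ> \<pi>"
  have key: "S (E(v:=c)) \<longleftrightarrow> sat U F R (E0(0:=c)) (th S)" if "S \<in> SS" "c \<in> U" for S c
  proof -
    have eq: "(E0(0:=c)) \<circ> \<pi> = E(v:=c)" by (auto simp: fun_eq_iff E0_def \<pi>_def)
    have r: "range (E(v:=c)) \<subseteq> U" using E that(2) by auto
    have "sat U F R (E0(0:=c)) (th S) = sat U F R ((E0(0:=c)) \<circ> \<pi>) (th0 S)"
      unfolding th_def by (rule sat_ren[OF inj])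
    also have "\<dots> = sat U F R (E(v:=c)) (th0 S)" by (simp only: eq)
    also have "\<dots> = S (E(v:=c))" using th0[OF that(1)] r by blast
    finally show ?thesis by simp
  qed
  define M where "M \<theta> = Max (insert 0 (fv \<theta>))" for \<theta> :: "('f,'r) fm"
  have Mge: "u \<in> fv \<theta> \<Longrightarrow> u \<le> M \<theta>" for u \<theta>
    unfolding M_def by (simp add: finite_fv)
  define ps where "ps S = map E0 [1..<Suc (M (th S))]" for S
  have hold: "holds U F R (th S) (c # ps S) \<longleftrightarrow> sat U F R (E0(0:=c)) (th S)" for S c
  proof -
    have "\<forall>u\<in>fv (th S). env U (c # ps S) u = (E0(0:=c)) u"
    proof
      fix u assume u: "u \<in> fv (th S)"
      then have le: "u \<le> M (th S)" by (rule Mge)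
      show "env U (c # ps S) u = (E0(0:=c)) u"
      proof (cases u)
        case 0 then show ?thesis by (simp add: env_def)
      next
        case (Suc k)
        then have "k < M (th S)" using le by simp
        then show ?thesis using Suc by (simp add: env_def ps_def del: upt_Suc)
      qed
    qed
    then show ?thesis unfolding holds_def by (rule sat_cong)
  qed
  have mon2: "\<forall>A \<Sigma>. A \<subseteq> U \<and> (\<exists>g :: 'f + 'r + nat \<Rightarrow> 'u. A \<subseteq> range g)
        \<and> \<Sigma> \<subseteq> {(\<psi>, ps). set ps \<subseteq> A \<and> fv \<psi> \<subseteq> {..< Suc (length ps)}}
        \<and> (\<forall>\<Sigma>0 \<subseteq> \<Sigma>. finite \<Sigma>0 \<longrightarrow> (\<exists>c\<in>U. \<forall>(\<psi>, ps)\<in>\<Sigma>0. holds U F R \<psi> (c # ps)))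
      \<longrightarrow> (\<exists>c\<in>U. \<forall>(\<psi>, ps)\<in>\<Sigma>. holds U F R \<psi> (c # ps))"
    using conjunct2[OF mon[unfolded monster_def]] .
  define Sig where "Sig = (\<lambda>S. (th S, ps S)) ` SS"
  have A1: "range E0 \<subseteq> U" using E by (auto simp: E0_def)
  have A2: "\<exists>g :: 'f + 'r + nat \<Rightarrow> 'u. range E0 \<subseteq> range g"
  proof (rule exI[of _ "\<lambda>x. case x of Inr (Inr k) \<Rightarrow> E0 k | _ \<Rightarrow> E0 0"], rule subsetI)
    fix y assume "y \<in> range E0"
    then obtain k where "y = E0 k" by blast
    then have "y = (\<lambda>x. case x of Inr (Inr k) \<Rightarrow> E0 k | _ \<Rightarrow> E0 0) (Inr (Inr k))" by simp
    then show "y \<in> range (\<lambda>x. case x of Inr (Inr k) \<Rightarrow> E0 k | _ \<Rightarrow> E0 0)" by blast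
  qed
  have A3: "Sig \<subseteq> {(\<psi>, ps). set ps \<subseteq> range E0 \<and> fv \<psi> \<subseteq> {..< Suc (length ps)}}"
  proof
    fix x assume "x \<in> Sig"
    then obtain S where x: "x = (th S, ps S)" unfolding Sig_def by blast
    have "set (ps S) \<subseteq> range E0" unfolding ps_def by auto
    moreover have "length (ps S) = M (th S)" by (simp add: ps_def)
    then have "fv (th S) \<subseteq> {..< Suc (length (ps S))}"
      using Mge[of _ "th S"] by (auto simp only: lessThan_iff less_Suc_eq_le subset_iff)
    ultimately show "x \<in> {(\<psi>, ps). set ps \<subseteq> range E0 \<and> fv \<psi> \<subseteq> {..< Suc (length ps)}}"
      using x by simp
  qed
  have A4: "\<forall>\<Sigma>0 \<subseteq> Sig. finite \<Sigma>0 \<longrightarrow> (\<exists>c\<in>U. \<forall>(\<psi>, ps)\<in>\<Sigma>0. holds U F R \<psi> (c # ps))"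
  proof (intro allI impI)
    fix \<Sigma>0 assume a: "\<Sigma>0 \<subseteq> Sig" "finite \<Sigma>0"
    then obtain S0 where S0: "S0 \<subseteq> SS" "finite S0" "\<Sigma>0 = (\<lambda>S. (th S, ps S)) ` S0"
      using finite_subset_image[OF a(2) a(1)[unfolded Sig_def]] by blast
    then obtain c where c: "c \<in> U" "\<forall>S\<in>S0. S (E(v:=c))" using fs by blast
    have hS: "holds U F R (th S) (c # ps S)" if "S \<in> S0" for S
    proof -
      have "S \<in> SS" using S0(1) that by blast
      moreover have "S (E(v:=c))" using c(2) that by blast
      ultimately show ?thesis using key[of S c] c(1) hold[of S c] by blast
    qed
    have "\<forall>(\<psi>, ps)\<in>\<Sigma>0. holds U F R \<psi> (c # ps)"
      unfolding S0(3) using hS by auto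
    then show "\<exists>c\<in>U. \<forall>(\<psi>, ps)\<in>\<Sigma>0. holds U F R \<psi> (c # ps)"
      using c(1) by blast
  qed
  obtain c where c: "c \<in> U" "\<forall>(\<psi>, ps)\<in>Sig. holds U F R \<psi> (c # ps)"
    using mon2[rule_format, OF conjI[OF A1 conjI[OF A2 conjI[OF A3 A4]]]] by blast
  have "\<forall>S\<in>SS. S (E(v:=c))"
  proof
    fix S assume "S \<in> SS"
    then have "(th S, ps S) \<in> Sig" unfolding Sig_def by blast
    from bspec[OF c(2) this] have "holds U F R (th S) (c # ps S)" by simp
    then show "S (E(v:=c))" using key[OF \<open>S \<in> SS\<close> c(1)] hold[of S c] by blast
  qed
  then show ?thesis using c(1) by blast
qed

lemma G:
  assumes "finite V"
  shows "\<And>E. range E \<subseteq> U \<Longrightarrow> \<forall>S\<in>SS. dfn S \<Longrightarrow>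
    \<forall>S0\<subseteq>SS. finite S0 \<longrightarrow> (\<exists>E'. range E' \<subseteq> U \<and> (\<forall>u. u \<notin> V \<longrightarrow> E' u = E u) \<and> (\<forall>S\<in>S0. S E')) \<Longrightarrow>
    \<exists>E'. range E' \<subseteq> U \<and> (\<forall>u. u \<notin> V \<longrightarrow> E' u = E u) \<and> (\<forall>S\<in>SS. S E')"
  using assms
proof (induction V rule: finite_induct)
  case empty
  have "S E" if "S \<in> SS" for S
  proof -
    from empty.prems(3)[rule_format, of "{S}"] that obtain E' where "\<forall>u. E' u = E u" "S E'" by auto
    moreover then have "E' = E" by (simp add: fun_eq_iff)
    ultimately show ?thesis by simp
  qed
  then show ?case using empty.prems(1) by blast
next
  case (insert v W)
  define Q where "Q S0 = (\<lambda>E. \<exists>E'. range E' \<subseteq> U \<and> (\<forall>u. u \<notin> W \<longrightarrow> E' u = E u) \<and> (\<forall>S\<in>S0. S E'))" for S0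
  define SS1 where "SS1 = Q ` {S0. S0 \<subseteq> SS \<and> finite S0}"
  have D1: "\<forall>S\<in>SS1. dfn S"
  proof
    fix S assume "S \<in> SS1"
    then obtain S0 where S0: "S0 \<subseteq> SS" "finite S0" "S = Q S0" unfolding SS1_def by blast
    have "dfn (\<lambda>E. \<forall>S\<in>S0. S E)"
      by (rule dfn_ball) (use S0 insert.prems(2) in auto)
    then show "dfn S" unfolding S0(3) Q_def by (rule dfn_exW[OF insert(1)])
  qed
  have fs1: "\<forall>S1\<subseteq>SS1. finite S1 \<longrightarrow> (\<exists>c\<in>U. \<forall>S\<in>S1. S (E(v:=c)))"
  proof (intro allI impI)
    fix S1 assume "S1 \<subseteq> SS1" "finite S1"
    then obtain C where C: "C \<subseteq> {S0. S0 \<subseteq> SS \<and> finite S0}" "finite C" "S1 = Q ` C"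
      using finite_subset_image[of S1 Q "{S0. S0 \<subseteq> SS \<and> finite S0}"] unfolding SS1_def by blast
    have "\<Union>C \<subseteq> SS" "finite (\<Union>C)" using C by auto
    from insert.prems(3)[rule_format, OF this] obtain E' where
      E': "range E' \<subseteq> U" "\<forall>u. u \<notin> insert v W \<longrightarrow> E' u = E u" "\<forall>S\<in>\<Union>C. S E'"
      by (elim exE conjE) (rule that)
    have "E' v \<in> U" using E'(1) by auto
    moreover have "\<forall>S\<in>S1. S (E(v := E' v))"
    proof
      fix S assume "S \<in> S1"
      then obtain S0 where "S0 \<in> C" "S = Q S0" using C(3) by blast
      moreover have "\<forall>u. u \<notin> W \<longrightarrow> E' u = (E(v := E' v)) u" using E'(2) by simp
      ultimately show "S (E(v := E' v))" unfolding Q_def using E'(1,3) by blast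
    qed
    ultimately show "\<exists>c\<in>U. \<forall>S\<in>S1. S (E(v:=c))" by blast
  qed
  obtain c where c: "c \<in> U" "\<forall>S\<in>SS1. S (E(v:=c))"
    using onevar[OF insert.prems(1) D1 fs1] by blast
  have IHp: "\<forall>S0\<subseteq>SS. finite S0 \<longrightarrow> (\<exists>E'. range E' \<subseteq> U \<and> (\<forall>u. u \<notin> W \<longrightarrow> E' u = (E(v:=c)) u) \<and> (\<forall>S\<in>S0. S E'))"
  proof (intro allI impI)
    fix S0 assume "S0 \<subseteq> SS" "finite S0"
    then have "Q S0 \<in> SS1" unfolding SS1_def by blast
    then have "Q S0 (E(v:=c))" using c(2) by blast
    then show "\<exists>E'. range E' \<subseteq> U \<and> (\<forall>u. u \<notin> W \<longrightarrow> E' u = (E(v:=c)) u) \<and> (\<forall>S\<in>S0. S E')"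
      unfolding Q_def .
  qed
  have "range (E(v:=c)) \<subseteq> U" using insert.prems(1) c(1) by auto
  from insert.IH[OF this insert.prems(2) IHp] obtain E' where
    E': "range E' \<subseteq> U" "\<forall>u. u \<notin> W \<longrightarrow> E' u = (E(v:=c)) u" "\<forall>S\<in>SS. S E'" by blast
  then have "\<forall>u. u \<notin> insert v W \<longrightarrow> E' u = E u" by auto
  then show ?case using E'(1,3) by blast
qed

lemma d_in: "(SOME u. u \<in> U) \<in> U"
  using Une by (simp add: some_in_eq)

lemma dfn_phi: "dfn (\<lambda>E. sat U F R (E \<circ> sg n m i j) \<phi> \<longleftrightarrow> b)"
  by (rule dfn_if, rule dfn_comp[OF inj_sg dfn_sat])

lemma realize:
  assumes fv: "fv \<phi> \<subseteq> {..<n+m}" and a: "\<forall>i. set (a i) \<subseteq> U \<and> length (a i) = n"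
    and p: "p \<in> phi_types U F R \<phi> m a"
  shows "\<exists>b. set b \<subseteq> U \<and> length b = m \<and> (\<forall>i. holds U F R \<phi> (a i @ b) = p i)"
proof -
  define d where "d = (SOME u. u \<in> U)"
  have d: "d \<in> U" unfolding d_def by (rule d_in)
  define E0 where "E0 = plug (\<lambda>_. d) a (\<lambda>_. [])"
  have E0r: "range E0 \<subseteq> U" unfolding E0_def by (rule plug_range) (use d a in auto)
  have E0X: "E0 (X i c) = a i ! c" if "c < n" for i c
    unfolding E0_def using that a by (simp add: plug_X)
  define V where "V = Y 0 ` {..<m}"
  define S where "S i = (\<lambda>E. sat U F R (E \<circ> sg n m i 0) \<phi> \<longleftrightarrow> p i)" for i
  have D: "\<forall>T\<in>range S. dfn T"
  proof
    fix T assume "T \<in> range S"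
    then obtain i where "T = S i" by blast
    then show "dfn T" unfolding S_def by (simp add: dfn_phi)
  qed
  have fs: "\<forall>S0\<subseteq>range S. finite S0 \<longrightarrow> (\<exists>E'. range E' \<subseteq> U \<and> (\<forall>u. u \<notin> V \<longrightarrow> E' u = E0 u) \<and> (\<forall>T\<in>S0. T E'))"
  proof (intro allI impI)
    fix S0 assume S0: "S0 \<subseteq> range S" "finite S0"
    obtain I where I: "finite I" "S0 = S ` I" using finite_subset_image[OF S0(2) S0(1)] by blast
    have "\<exists>b. set b \<subseteq> U \<and> length b = m \<and> (\<forall>i\<in>I. holds U F R \<phi> (a i @ b) = p i)"
      using p I(1) unfolding phi_types_def by blast
    then obtain b where b: "set b \<subseteq> U" "length b = m" "\<forall>i\<in>I. holds U F R \<phi> (a i @ b) = p i"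
      by blast
    define E' where "E' = plug E0 (\<lambda>_. []) (\<lambda>j. if j = 0 then b else [])"
    have r: "range E' \<subseteq> U" unfolding E'_def by (rule plug_range) (use E0r b in auto)
    have ag: "\<forall>u. u \<notin> V \<longrightarrow> E' u = E0 u"
    proof (intro allI impI)
      fix u assume "u \<notin> V"
      show "E' u = E0 u" unfolding E'_def
        by (rule plug_other) (use \<open>u \<notin> V\<close> b(2) in \<open>auto simp: V_def split: if_splits\<close>)
    qed
    have "\<forall>T\<in>S0. T E'"
    proof
      fix T assume "T \<in> S0"
      then obtain i where i: "i \<in> I" "T = S i" using I(2) by blast
      have "sat U F R (E' \<circ> sg n m i 0) \<phi> = holds U F R \<phi> (a i @ b)"
      proof (rule sat_sg[OF fv])
        show "length (a i) = n" using a by blast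
        show "length b = m" by fact
      next
        fix c assume "c < n"
        have "E' (X i c) = E0 (X i c)" unfolding E'_def by (rule plug_other) (auto simp: X_neq_Y)
        then show "E' (X i c) = a i ! c" using E0X[OF \<open>c<n\<close>] by simp
      next
        fix c assume "c < m"
        then show "E' (Y 0 c) = b ! c" unfolding E'_def using b(2) by (simp add: plug_Y)
      qed
      then show "T E'" using i b(3) unfolding S_def by simp
    qed
    then show "\<exists>E'. range E' \<subseteq> U \<and> (\<forall>u. u \<notin> V \<longrightarrow> E' u = E0 u) \<and> (\<forall>T\<in>S0. T E')"
      using r ag by blast
  qed
  have "finite V" unfolding V_def by simp
  from G[OF this E0r D fs] obtain E' where
    E': "range E' \<subseteq> U" "\<forall>u. u \<notin> V \<longrightarrow> E' u = E0 u" "\<forall>T\<in>range S. T E'" by blast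
  define b where "b = map (\<lambda>c. E' (Y 0 c)) [0..<m]"
  have "set b \<subseteq> U" "length b = m" using E'(1) by (auto simp: b_def)
  moreover have "\<forall>i. holds U F R \<phi> (a i @ b) = p i"
  proof
    fix i
    have "sat U F R (E' \<circ> sg n m i 0) \<phi> = holds U F R \<phi> (a i @ b)"
    proof (rule sat_sg[OF fv])
      show "length (a i) = n" using a by blast
      show "length b = m" by (simp add: b_def)
    next
      fix c assume "c < n"
      have "X i c \<notin> V" by (auto simp: V_def X_neq_Y)
      then show "E' (X i c) = a i ! c" using E'(2) E0X[OF \<open>c<n\<close>] by simp
    next
      fix c assume "c < m" then show "E' (Y 0 c) = b ! c" by (simp add: b_def)
    qed
    moreover have "S i E'" using E'(3) by blast
    ultimately show "holds U F R \<phi> (a i @ b) = p i" unfolding S_def by simp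
  qed
  ultimately show ?thesis by blast
qed

end
lemma EV:
  assumes "(\<lambda>i. of_bool (p i) :: real) \<longlonglongrightarrow> L"
  shows "\<exists>M. (\<forall>i\<ge>M. p i = p M) \<and> L = of_bool (p M)"
proof -
  obtain M where M: "\<forall>i\<ge>M. norm (of_bool (p i) - L :: real) < 1/2"
    using LIMSEQ_D[OF assms, of "1/2"] by auto
  have c: "p i = p M" if "i \<ge> M" for i
  proof (rule ccontr)
    assume "p i \<noteq> p M"
    moreover have "norm (of_bool (p i) - L :: real) < 1/2" "norm (of_bool (p M) - L :: real) < 1/2"
      using M that by auto
    ultimately show False by (cases "p i"; cases "p M") auto
  qed
  have "(\<lambda>i. of_bool (p i) :: real) \<longlonglongrightarrow> of_bool (p M)"
  proof (rule Lim_transform_eventually[OF tendsto_const])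
    show "\<forall>\<^sub>F i in sequentially. of_bool (p M) = (of_bool (p i) :: real)"
      unfolding eventually_sequentially
    proof (intro exI allI impI)
      fix i assume "M \<le> i" then have "p i = p M" by (rule c)
      then show "of_bool (p M) = (of_bool (p i) :: real)" by simp
    qed
  qed
  then have "L = of_bool (p M)" using assms by (rule LIMSEQ_unique[rotated])
  then show ?thesis using c by blast
qed

lemma comb_ii:
  assumes conv: "\<forall>q\<in>P. (\<lambda>i. of_bool (q i) :: real) \<longlonglongrightarrow> f q" and p: "p \<in> P"
    and dis: "\<forall>x. \<exists>q\<in>P. (\<forall>i\<le>x. q i = p i) \<and> f q \<noteq> f p"
  shows "\<exists>(xs::nat \<Rightarrow> nat) (qs::nat \<Rightarrow> nat \<Rightarrow> bool) v. strict_mono xs \<and> (\<forall>t. qs t \<in> P) \<and> (\<forall>s t. qs t (xs s) = (if s \<le> t then v else \<not> v))"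
proof -
  obtain Mp where Mp: "\<forall>i\<ge>Mp. p i = p Mp" "f p = of_bool (p Mp)" using EV conv p by blast
  define v where "v = p Mp"
  define Q where "Q x = (SOME q. q \<in> P \<and> (\<forall>i\<le>x. q i = p i) \<and> f q \<noteq> f p)" for x
  have Q: "Q x \<in> P \<and> (\<forall>i\<le>x. Q x i = p i) \<and> f (Q x) \<noteq> f p" for x
  proof -
    have "\<exists>q. q \<in> P \<and> (\<forall>i\<le>x. q i = p i) \<and> f q \<noteq> f p" using dis by blast
    then show ?thesis unfolding Q_def by (rule someI_ex)
  qed
  define Mf where "Mf q = (SOME M. (\<forall>i\<ge>M. q i = q M) \<and> f q = of_bool (q M))" for q
  have Mf: "(\<forall>i\<ge>Mf q. q i = q (Mf q)) \<and> f q = of_bool (q (Mf q))" if "q \<in> P" for q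
  proof -
    have "(\<lambda>i. of_bool (q i) :: real) \<longlonglongrightarrow> f q" using conv that by blast
    then have "\<exists>M. (\<forall>i\<ge>M. q i = q M) \<and> f q = of_bool (q M)" by (rule EV)
    then show ?thesis unfolding Mf_def by (rule someI_ex)
  qed
  have Qev: "Q x i = (\<not> v)" if "i \<ge> Mf (Q x)" for x i
  proof -
    have QP: "Q x \<in> P" using Q by blast
    have mf: "(\<forall>i\<ge>Mf (Q x). Q x i = Q x (Mf (Q x))) \<and> f (Q x) = of_bool (Q x (Mf (Q x)))"
      by (rule Mf[OF QP])
    have "Q x i = Q x (Mf (Q x))" using mf that by blast
    moreover have "f (Q x) = of_bool (Q x (Mf (Q x)))" using mf by (rule conjunct2)
    moreover have "f (Q x) \<noteq> of_bool v" using Q[of x] Mp(2) v_def by simp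
    ultimately show ?thesis by (cases "Q x i"; cases v) auto
  qed
  define xs where "xs = rec_nat Mp (\<lambda>s x. max (Suc x) (Mf (Q x)))"
  have xs0: "xs 0 = Mp" and xsS: "xs (Suc s) = max (Suc (xs s)) (Mf (Q (xs s)))" for s
    unfolding xs_def by simp_all
  have sm: "strict_mono xs" unfolding strict_mono_Suc_iff
  proof
    fix s show "xs s < xs (Suc s)" unfolding xsS by (rule less_le_trans[OF lessI max.cobounded1])
  qed
  have geMp: "xs s \<ge> Mp" for s
  proof (induction s)
    case 0 then show ?case by (simp add: xs0)
  next
    case (Suc s) then show ?case by (simp add: xsS)
  qed
  define qs where "qs t = Q (xs t)" for t
  have qsv: "qs t (xs s) = (if s \<le> t then v else \<not> v)" for s t
  proof (cases "s \<le> t")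
    case True
    then have "xs s \<le> xs t" using sm by (simp add: strict_mono_less_eq)
    then have "qs t (xs s) = p (xs s)" using Q[of "xs t"] unfolding qs_def by blast
    also have "\<dots> = v" unfolding v_def using Mp(1) geMp[of s] by blast
    finally show ?thesis using True by simp
  next
    case False
    then have "xs (Suc t) \<le> xs s" using sm by (simp add: strict_mono_less_eq)
    then have "Mf (Q (xs t)) \<le> xs s" by (simp add: xsS)
    then show ?thesis using Qev False by (simp add: qs_def)
  qed
  have qsP: "\<forall>t. qs t \<in> P" using Q by (simp add: qs_def)
  show ?thesis
    by (rule exI[of _ xs], rule exI[of _ qs], rule exI[of _ v]) (use sm qsP qsv in blast)
qed

lemma alt:
  "finite D \<Longrightarrow> L \<le> card D \<Longrightarrow> (\<forall>d\<in>D. x \<le> d \<and> w d \<noteq> w (Suc d)) \<Longrightarrow>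
   \<exists>ps. length ps = Suc L \<and> (\<forall>r r'. r < r' \<longrightarrow> r' < Suc L \<longrightarrow> ps!r < ps!r') \<and>
     (\<forall>r<Suc L. x \<le> ps!r) \<and> (\<forall>r<Suc L. w (ps!r) = (if even r then w x else \<not> w x))"
proof (induction L arbitrary: x D)
  case 0
  show ?case by (rule exI[of _ "[x]"]) simp
next
  case (Suc L)
  then have "D \<noteq> {}" by auto
  then obtain d1 where d1: "d1 \<in> D" by blast
  define d0 where "d0 = (LEAST d. x \<le> d \<and> w d \<noteq> w (Suc d))"
  have d0: "x \<le> d0 \<and> w d0 \<noteq> w (Suc d0)" unfolding d0_def
    by (rule LeastI[of _ d1]) (use d1 Suc.prems(3) in blast)
  have d0le: "d0 \<le> d" if "d \<in> D" for d unfolding d0_def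
    by (rule Least_le) (use that Suc.prems(3) in blast)
  have const: "x \<le> i \<Longrightarrow> i \<le> d0 \<Longrightarrow> w i = w x" for i
  proof (induction i)
    case 0 then show ?case by simp
  next
    case (Suc i)
    show ?case
    proof (cases "x \<le> i")
      case True
      have "\<not> (x \<le> i \<and> w i \<noteq> w (Suc i))" unfolding d0_def
        by (rule not_less_Least) (use Suc.prems in \<open>simp add: d0_def\<close>)
      then show ?thesis using Suc True by auto
    next
      case False then have "x = Suc i" using Suc.prems by simp
      then show ?thesis by simp
    qed
  qed
  have wd0: "w (Suc d0) = (\<not> w x)" using const[of d0] d0 by auto
  define D' where "D' = D - {d0}"
  have fD': "finite D'" using Suc.prems(1) by (simp add: D'_def)
  have cD': "L \<le> card D'" using Suc.prems(1,2) by (auto simp: D'_def card_Diff_singleton_if)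
  have pD': "\<forall>d\<in>D'. Suc d0 \<le> d \<and> w d \<noteq> w (Suc d)"
    using d0le Suc.prems(3) by (auto simp: D'_def Suc_le_eq order.not_eq_order_implies_strict)
  obtain ps where ps: "length ps = Suc L" "\<forall>r r'. r < r' \<longrightarrow> r' < Suc L \<longrightarrow> ps!r < ps!r'"
    "\<forall>r<Suc L. Suc d0 \<le> ps!r" "\<forall>r<Suc L. w (ps!r) = (if even r then w (Suc d0) else \<not> w (Suc d0))"
    using Suc.IH[OF fD' cD' pD'] by blast
  show ?case
  proof (rule exI[of _ "x # ps"], intro conjI allI impI)
    show "length (x # ps) = Suc (Suc L)" using ps(1) by simp
  next
    fix r r' :: nat assume h: "r < r'" "r' < Suc (Suc L)"
    then obtain r'' where r'': "r' = Suc r''" by (cases r') auto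
    have "r'' < Suc L" using h r'' by simp
    show "(x # ps) ! r < (x # ps) ! r'"
    proof (cases r)
      case 0
      have "Suc d0 \<le> ps ! r''" using ps(3) \<open>r'' < Suc L\<close> by blast
      then show ?thesis using 0 r'' d0 by simp
    next
      case (Suc r0)
      then have "r0 < r''" using h r'' by simp
      then have "ps ! r0 < ps ! r''" using ps(2) \<open>r'' < Suc L\<close> by blast
      then show ?thesis using Suc r'' by simp
    qed
  next
    fix r :: nat assume "r < Suc (Suc L)"
    then show "x \<le> (x # ps) ! r"
    proof (cases r)
      case (Suc r0)
      then have "Suc d0 \<le> ps ! r0" using ps(3) \<open>r < Suc (Suc L)\<close> by simp
      then show ?thesis using Suc d0 by simp
    qed simp
  next
    fix r :: nat assume "r < Suc (Suc L)"
    then show "w ((x # ps) ! r) = (if even r then w x else \<not> w x)"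
      using ps(4) wd0 by (cases r) auto
  qed
qed

lemma rank_image:
  assumes "\<forall>r r'. r < r' \<longrightarrow> r' < L \<longrightarrow> g r < (g r' :: nat)"
  shows "card (g ` {..<L}) = L" "\<And>r. r < L \<Longrightarrow> card {y \<in> g ` {..<L}. y < g r} = r"
proof -
  have inj: "inj_on g {..<L}"
  proof (rule inj_onI)
    fix r r' assume "r \<in> {..<L}" "r' \<in> {..<L}" "g r = g r'"
    then show "r = r'" using assms by (metis lessThan_iff less_irrefl nat_neq_iff)
  qed
  then show "card (g ` {..<L}) = L" by (simp add: card_image)
  fix r assume r: "r < L"
  have "{y \<in> g ` {..<L}. y < g r} = g ` {..<r}"
  proof
    show "{y \<in> g ` {..<L}. y < g r} \<subseteq> g ` {..<r}"
    proof
      fix y assume "y \<in> {y \<in> g ` {..<L}. y < g r}"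
      then obtain r'' where "r'' < L" "y = g r''" "g r'' < g r" by auto
      then have "r'' < r" using assms r by (metis not_less_iff_gr_or_eq less_asym)
      then show "y \<in> g ` {..<r}" using \<open>y = g r''\<close> by blast
    qed
    show "g ` {..<r} \<subseteq> {y \<in> g ` {..<L}. y < g r}" using assms r by auto
  qed
  moreover have "inj_on g {..<r}" by (rule inj_on_subset[OF inj]) (use r in auto)
  ultimately show "card {y \<in> g ` {..<L}. y < g r} = r" by (simp add: card_image)
qed

definition HG :: "'u set \<Rightarrow> ('f \<Rightarrow> 'u list \<Rightarrow> 'u) \<Rightarrow> ('r \<Rightarrow> 'u list \<Rightarrow> bool) \<Rightarrow> ('f,'r) fm
    \<Rightarrow> nat \<Rightarrow> nat \<Rightarrow> nat \<Rightarrow> (nat \<Rightarrow> 'u) \<Rightarrow> bool" where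
  "HG U F R \<phi> n m k E \<longleftrightarrow> (\<forall>i<k. \<forall>j<k. sat U F R (E \<circ> sg n m i j) \<phi> \<longleftrightarrow> i < j)"

lemma HG_mono: "HG U F R \<phi> n m k E \<Longrightarrow> k' \<le> k \<Longrightarrow> HG U F R \<phi> n m k' E"
  unfolding HG_def by auto

lemma HG_cong:
  assumes fv: "fv \<phi> \<subseteq> {..<n+m}"
    and "\<forall>i<k. \<forall>c<n. E (X i c) = E' (X i c)" "\<forall>j<k. \<forall>c<m. E (Y j c) = E' (Y j c)"
  shows "HG U F R \<phi> n m k E = HG U F R \<phi> n m k E'"
proof -
  have "sat U F R (E \<circ> sg n m i j) \<phi> = sat U F R (E' \<circ> sg n m i j) \<phi>" if "i < k" "j < k" for i j
  proof (rule sat_cong, rule ballI)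
    fix u assume "u \<in> fv \<phi>"
    then have u: "u < n + m" using fv by auto
    show "(E \<circ> sg n m i j) u = (E' \<circ> sg n m i j) u"
      using assms(2,3) that u by (auto simp: sg_def)
  qed
  then show ?thesis unfolding HG_def by auto
qed

context mon
begin

lemma dfn_HG: "dfn (HG U F R \<phi> n m k)"
proof -
  have "dfn (\<lambda>E. \<forall>x\<in>{..<k}\<times>{..<k}. sat U F R (E \<circ> sg n m (fst x) (snd x)) \<phi> \<longleftrightarrow> fst x < snd x)"
    by (rule dfn_ball) (auto intro: dfn_phi)
  then show ?thesis
    by (rule dfn_cong) (auto simp: HG_def)
qed

lemma hg_bound:
  assumes fv: "fv \<phi> \<subseteq> {..<n+m}" and st: "stable U F R"
  shows "\<exists>K::nat. \<not>(\<exists>a b. (\<forall>i<K. set (a i) \<subseteq> U \<and> length (a i) = n) \<and>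
      (\<forall>j<K. set (b j) \<subseteq> U \<and> length (b j) = m) \<and>
      (\<forall>i<K. \<forall>j<K. holds U F R \<phi> (a i @ b j) \<longleftrightarrow> i < j))"
proof (rule ccontr)
  assume nt: "\<not> ?thesis"
  have hK: "\<exists>a b. (\<forall>i<K. set (a i) \<subseteq> U \<and> length (a i) = n) \<and>
      (\<forall>j<K. set (b j) \<subseteq> U \<and> length (b j) = m) \<and>
      (\<forall>i<K. \<forall>j<K. holds U F R \<phi> (a i @ b j) \<longleftrightarrow> i < j)" (is "?P K") for K :: nat
  proof (rule ccontr)
    assume "\<not> ?P K"
    then have "\<exists>K. \<not> ?P K" by (rule exI)
    with nt show False by (rule notE)
  qed
  define d where "d = (SOME u. u \<in> U)"
  have d: "d \<in> U" unfolding d_def by (rule d_in)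
  define Inv where "Inv s E = (\<forall>k. \<exists>E'. range E' \<subseteq> U \<and> (\<forall>i<s. \<forall>c<n. E' (X i c) = E (X i c))
      \<and> HG U F R \<phi> n m k E')" for s E
  define E00 where "E00 = (\<lambda>_::nat. d)"
  have base: "Inv 0 E00"
    unfolding Inv_def
  proof
    fix k :: nat
    obtain a b where ab: "\<forall>i<k. set (a i) \<subseteq> U \<and> length (a i) = n"
      "\<forall>j<k. set (b j) \<subseteq> U \<and> length (b j) = m"
      "\<forall>i<k. \<forall>j<k. holds U F R \<phi> (a i @ b j) \<longleftrightarrow> i < j"
      using hK[of k] by blast
    define a' where "a' i = (if i < k then a i else [])" for i
    define b' where "b' j = (if j < k then b j else [])" for j
    define E' where "E' = plug E00 a' b'"
    have "range E' \<subseteq> U" unfolding E'_def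
      by (rule plug_range) (use d ab(1,2) in \<open>auto simp: E00_def a'_def b'_def\<close>)
    moreover have "HG U F R \<phi> n m k E'"
      unfolding HG_def
    proof (intro allI impI)
      fix i j assume ij: "i < k" "j < k"
      have "sat U F R (E' \<circ> sg n m i j) \<phi> = holds U F R \<phi> (a i @ b j)"
      proof (rule sat_sg[OF fv])
        show "length (a i) = n" using ab(1) ij by blast
        show "length (b j) = m" using ab(2) ij by blast
      next
        fix c assume "c < n"
        then show "E' (X i c) = a i ! c" unfolding E'_def using ab(1) ij
          by (simp add: plug_X a'_def)
      next
        fix c assume "c < m"
        then show "E' (Y j c) = b j ! c" unfolding E'_def using ab(2) ij
          by (simp add: plug_Y b'_def)
      qed
      then show "sat U F R (E' \<circ> sg n m i j) \<phi> \<longleftrightarrow> i < j" using ab(3) ij by simp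
    qed
    ultimately show "\<exists>E'. range E' \<subseteq> U \<and> (\<forall>i<0. \<forall>c<n. E' (X i c) = E00 (X i c))
      \<and> HG U F R \<phi> n m k E'" by blast
  qed
  have step: "\<exists>E'. range E' \<subseteq> U \<and> (\<forall>u. u \<notin> X s ` {..<n} \<longrightarrow> E' u = E u) \<and> Inv (Suc s) E'"
    if E: "range E \<subseteq> U" and I: "Inv s E" for s E
  proof -
    define V where "V = X s ` {..<n}"
    define P where "P k = (\<lambda>E. \<exists>E'. range E' \<subseteq> U \<and> (\<forall>i<Suc s. \<forall>c<n. E' (X i c) = E (X i c))
        \<and> HG U F R \<phi> n m k E')" for k
    define W where "W k = ((\<lambda>(i,c). X i c) ` ({Suc s..<k} \<times> {..<n})) \<union>
        ((\<lambda>(j,c). Y j c) ` ({..<k} \<times> {..<m}))" for k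
    have D: "\<forall>T\<in>range P. dfn T"
    proof
      fix T assume "T \<in> range P" then obtain k where k: "T = P k" by blast
      have "dfn (\<lambda>E. \<exists>E'. range E' \<subseteq> U \<and> (\<forall>u. u \<notin> W k \<longrightarrow> E' u = E u) \<and> HG U F R \<phi> n m k E')"
        by (rule dfn_exW) (auto simp: W_def intro: dfn_HG)
      then show "dfn T" unfolding k
      proof (rule dfn_cong)
        fix E :: "nat \<Rightarrow> 'u" assume "range E \<subseteq> U"
        show "(\<exists>E'. range E' \<subseteq> U \<and> (\<forall>u. u \<notin> W k \<longrightarrow> E' u = E u) \<and> HG U F R \<phi> n m k E') \<longleftrightarrow> P k E"
        proof
          assume "\<exists>E'. range E' \<subseteq> U \<and> (\<forall>u. u \<notin> W k \<longrightarrow> E' u = E u) \<and> HG U F R \<phi> n m k E'"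
          then obtain E' where E': "range E' \<subseteq> U" "\<forall>u. u \<notin> W k \<longrightarrow> E' u = E u" "HG U F R \<phi> n m k E'"
            by blast
          have "\<forall>i<Suc s. \<forall>c<n. E' (X i c) = E (X i c)"
          proof (intro allI impI)
            fix i c assume "i < Suc s" "c < n"
            have "X i c \<notin> W k" using \<open>i<Suc s\<close> by (auto simp: W_def X_inj X_neq_Y)
            then show "E' (X i c) = E (X i c)" using E'(2) by blast
          qed
          then show "P k E" unfolding P_def using E'(1,3) by blast
        next
          assume "P k E"
          then obtain E' where E': "range E' \<subseteq> U" "\<forall>i<Suc s. \<forall>c<n. E' (X i c) = E (X i c)"
            "HG U F R \<phi> n m k E'" unfolding P_def by blast
          define E'' where "E'' = (\<lambda>u. if u \<in> W k then E' u else E u)"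
          have "range E'' \<subseteq> U" using E'(1) \<open>range E \<subseteq> U\<close> by (auto simp: E''_def)
          moreover have "\<forall>u. u \<notin> W k \<longrightarrow> E'' u = E u" by (simp add: E''_def)
          moreover have "HG U F R \<phi> n m k E''"
          proof -
            have "HG U F R \<phi> n m k E'' = HG U F R \<phi> n m k E'"
            proof (rule HG_cong[OF fv])
              show "\<forall>i<k. \<forall>c<n. E'' (X i c) = E' (X i c)"
              proof (intro allI impI)
                fix i c assume "i<k" "c<n"
                show "E'' (X i c) = E' (X i c)"
                proof (cases "i < Suc s")
                  case True then have "X i c \<notin> W k" by (auto simp: W_def X_inj X_neq_Y)
                  then show ?thesis using E'(2) True \<open>c<n\<close> by (simp add: E''_def)
                next
                  case False
                  then have "(i, c) \<in> {Suc s..<k} \<times> {..<n}" using \<open>i<k\<close> \<open>c<n\<close> by auto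
                  then have "X i c \<in> W k" unfolding W_def by force
                  then show ?thesis by (simp add: E''_def)
                qed
              qed
              show "\<forall>j<k. \<forall>c<m. E'' (Y j c) = E' (Y j c)"
              proof (intro allI impI)
                fix j c assume "j<k" "c<m"
                then have "(j, c) \<in> {..<k} \<times> {..<m}" by auto
                then have "Y j c \<in> W k" unfolding W_def by force
                then show "E'' (Y j c) = E' (Y j c)" by (simp add: E''_def)
              qed
            qed
            then show ?thesis using E'(3) by simp
          qed
          ultimately show "\<exists>E'. range E' \<subseteq> U \<and> (\<forall>u. u \<notin> W k \<longrightarrow> E' u = E u) \<and> HG U F R \<phi> n m k E'"
            by blast
        qed
      qed
    qed
    have fs: "\<forall>S0\<subseteq>range P. finite S0 \<longrightarrow> (\<exists>E'. range E' \<subseteq> U \<and> (\<forall>u. u \<notin> V \<longrightarrow> E' u = E u) \<and> (\<forall>T\<in>S0. T E'))"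
    proof (intro allI impI)
      fix S0 assume S0: "S0 \<subseteq> range P" "finite S0"
      obtain Ks where Ks: "finite Ks" "S0 = P ` Ks" using finite_subset_image[OF S0(2) S0(1)] by blast
      define k0 where "k0 = Max (insert 0 Ks)"
      have k0: "k \<le> k0" if "k \<in> Ks" for k using Ks(1) that by (simp add: k0_def)
      obtain E'' where E'': "range E'' \<subseteq> U" "\<forall>i<s. \<forall>c<n. E'' (X i c) = E (X i c)" "HG U F R \<phi> n m k0 E''"
        using I unfolding Inv_def by blast
      define E1 where "E1 = (\<lambda>u. if u \<in> V then E'' u else E u)"
      have r1: "range E1 \<subseteq> U" using E''(1) E by (auto simp: E1_def)
      have ag: "\<forall>u. u \<notin> V \<longrightarrow> E1 u = E u" by (simp add: E1_def)
      have "\<forall>T\<in>S0. T E1"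
      proof
        fix T assume "T \<in> S0" then obtain k where k: "k \<in> Ks" "T = P k" using Ks(2) by blast
        have "\<forall>i<Suc s. \<forall>c<n. E'' (X i c) = E1 (X i c)"
        proof (intro allI impI)
          fix i c assume "i < Suc s" "c < n"
          show "E'' (X i c) = E1 (X i c)"
          proof (cases "i = s")
            case True then show ?thesis using \<open>c<n\<close> by (simp add: E1_def V_def)
          next
            case False then have "X i c \<notin> V" by (auto simp: V_def X_inj)
            then show ?thesis using E''(2) False \<open>i<Suc s\<close> \<open>c<n\<close> by (simp add: E1_def)
          qed
        qed
        moreover have "HG U F R \<phi> n m k E''" using HG_mono[OF E''(3) k0[OF k(1)]] .
        ultimately show "T E1" unfolding k(2) P_def using E''(1) by blast
      qed
      then show "\<exists>E'. range E' \<subseteq> U \<and> (\<forall>u. u \<notin> V \<longrightarrow> E' u = E u) \<and> (\<forall>T\<in>S0. T E')"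
        using r1 ag by blast
    qed
    have "finite V" unfolding V_def by simp
    from G[OF this E D fs] obtain E' where
      E': "range E' \<subseteq> U" "\<forall>u. u \<notin> V \<longrightarrow> E' u = E u" "\<forall>T\<in>range P. T E'" by blast
    have "Inv (Suc s) E'" unfolding Inv_def
    proof
      fix k :: nat have "P k E'" using E'(3) by blast
      then show "\<exists>E''. range E'' \<subseteq> U \<and> (\<forall>i<Suc s. \<forall>c<n. E'' (X i c) = E' (X i c))
        \<and> HG U F R \<phi> n m k E''" unfolding P_def .
    qed
    then show ?thesis using E'(1,2) unfolding V_def by blast
  qed
  define nxt where "nxt s E = (SOME E'. range E' \<subseteq> U \<and> (\<forall>u. u \<notin> X s ` {..<n} \<longrightarrow> E' u = E u)
      \<and> Inv (Suc s) E')" for s E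
  define Es where "Es = rec_nat E00 nxt"
  have Es0: "Es 0 = E00" unfolding Es_def by simp
  have EsS: "Es (Suc s) = nxt s (Es s)" for s unfolding Es_def by simp
  have good: "range (Es s) \<subseteq> U \<and> Inv s (Es s) \<and>
      (\<forall>u. u \<notin> X (s - 1) ` {..<n} \<longrightarrow> 0 < s \<longrightarrow> Es s u = Es (s - 1) u)" for s
  proof (induction s)
    case 0 show ?case using base d by (auto simp: Es0 E00_def)
  next
    case (Suc s)
    from step[OF conjunct1[OF Suc.IH] conjunct1[OF conjunct2[OF Suc.IH]]]
    have "range (nxt s (Es s)) \<subseteq> U \<and> (\<forall>u. u \<notin> X s ` {..<n} \<longrightarrow> nxt s (Es s) u = Es s u)
      \<and> Inv (Suc s) (nxt s (Es s))" unfolding nxt_def by (rule someI_ex)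
    then show ?case by (simp add: EsS)
  qed
  have stab: "Es (Suc i + t) (X i c) = Es (Suc i) (X i c)" for i t c
  proof (induction t)
    case 0 show ?case by simp
  next
    case (Suc t)
    have "X i c \<notin> X (Suc i + t) ` {..<n}" by (auto simp: X_inj)
    then have "Es (Suc (Suc i + t)) (X i c) = Es (Suc i + t) (X i c)"
      using good[of "Suc (Suc i + t)"] by simp
    then show ?case using Suc.IH by simp
  qed
  define a' where "a' i = map (\<lambda>c. Es (Suc i) (X i c)) [0..<n]" for i
  have rng: "Es s u \<in> U" for s u using good[of s] by blast
  have a': "\<forall>i. set (a' i) \<subseteq> U \<and> length (a' i) = n"
    by (auto simp: a'_def rng)
  have q: "(\<lambda>i. i < t) \<in> phi_types U F R \<phi> m a'" for t
    unfolding phi_types_def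
  proof (intro CollectI allI impI)
    fix I :: "nat set" assume "finite I"
    define Z where "Z = Suc (Max (insert t I))"
    have tZ: "t < Z" unfolding Z_def using \<open>finite I\<close> by (simp add: le_imp_less_Suc)
    have IZ: "i < Z" if "i \<in> I" for i unfolding Z_def using \<open>finite I\<close> that by (simp add: le_imp_less_Suc)
    obtain E' where E': "range E' \<subseteq> U" "\<forall>i<Z. \<forall>c<n. E' (X i c) = Es Z (X i c)" "HG U F R \<phi> n m Z E'"
      using good[of Z] unfolding Inv_def by blast
    define b where "b = map (\<lambda>c. E' (Y t c)) [0..<m]"
    have b: "set b \<subseteq> U" "length b = m" using E'(1) by (auto simp: b_def)
    have "\<forall>i\<in>I. holds U F R \<phi> (a' i @ b) = (i < t)"
    proof
      fix i assume "i \<in> I"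
      then have iZ: "i < Z" by (rule IZ)
      have "sat U F R (E' \<circ> sg n m i t) \<phi> = holds U F R \<phi> (a' i @ b)"
      proof (rule sat_sg[OF fv])
        show "length (a' i) = n" using a' by blast
        show "length b = m" by (fact b(2))
      next
        fix c assume "c < n"
        have "E' (X i c) = Es Z (X i c)" using E'(2) iZ \<open>c<n\<close> by blast
        also have "\<dots> = Es (Suc i + (Z - Suc i)) (X i c)" using iZ by simp
        also have "\<dots> = Es (Suc i) (X i c)" by (rule stab)
        finally show "E' (X i c) = a' i ! c" using \<open>c<n\<close> by (simp add: a'_def)
      next
        fix c assume "c < m" then show "E' (Y t c) = b ! c" by (simp add: b_def)
      qed
      moreover have "sat U F R (E' \<circ> sg n m i t) \<phi> \<longleftrightarrow> i < t"
        using E'(3) iZ tZ unfolding HG_def by blast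
      ultimately show "holds U F R \<phi> (a' i @ b) = (i < t)" by simp
    qed
    then show "\<exists>b. set b \<subseteq> U \<and> length b = m \<and> (\<forall>i\<in>I. holds U F R \<phi> (a' i @ b) = (i < t))"
      using b by blast
  qed
  have "\<forall>t. \<exists>b. set b \<subseteq> U \<and> length b = m \<and> (\<forall>i. holds U F R \<phi> (a' i @ b) = (i < t))"
    using realize[OF fv a' q] by blast
  then obtain dd where dd: "\<forall>t. set (dd t) \<subseteq> U \<and> length (dd t) = m \<and> (\<forall>i. holds U F R \<phi> (a' i @ dd t) = (i < t))"
    by metis
  then have "order_property U F R \<phi> n m" unfolding order_property_def using a' by blast
  then show False using st fv unfolding stable_def by blast
qed

end


lemma holds_Neg: "holds U F R (Neg \<phi>) ps = (\<not> holds U F R \<phi> ps)"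
  by (simp add: holds_def)

lemma abs_of_bool_diff: "\<bar>of_bool x - of_bool y :: real\<bar> = of_bool (x \<noteq> y)"
  by (cases x; cases y) auto

context mon
begin

lemma locconst:
  assumes st: "stable U F R" and fv: "fv \<phi> \<subseteq> {..<n+m}" and a: "\<forall>i. set (a i) \<subseteq> U \<and> length (a i) = n"
    and conv: "\<forall>p\<in>phi_types U F R \<phi> m a. (\<lambda>i. of_bool (p i) :: real) \<longlonglongrightarrow> f p"
    and p: "p \<in> phi_types U F R \<phi> m a"
  shows "\<exists>x. \<forall>q\<in>phi_types U F R \<phi> m a. (\<forall>i\<le>x. q i = p i) \<longrightarrow> f q = f p"
proof (rule ccontr)
  assume "\<not> ?thesis"
  then have dis: "\<forall>x. \<exists>q\<in>phi_types U F R \<phi> m a. (\<forall>i\<le>x. q i = p i) \<and> f q \<noteq> f p" by blast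
  obtain xs :: "nat \<Rightarrow> nat" and qs :: "nat \<Rightarrow> nat \<Rightarrow> bool" and v where X: "strict_mono xs" "\<forall>t. qs t \<in> phi_types U F R \<phi> m a"
    "\<forall>s t. qs t (xs s) = (if s \<le> t then v else \<not> v)"
    using comb_ii[OF conv p dis] by blast
  have "\<forall>t. \<exists>b. set b \<subseteq> U \<and> length b = m \<and> (\<forall>i. holds U F R \<phi> (a i @ b) = qs t i)"
  proof
    fix t show "\<exists>b. set b \<subseteq> U \<and> length b = m \<and> (\<forall>i. holds U F R \<phi> (a i @ b) = qs t i)"
      using realize[OF fv a] X(2) by blast
  qed
  then obtain bb where bb: "\<forall>t. set (bb t) \<subseteq> U \<and> length (bb t) = m \<and> (\<forall>i. holds U F R \<phi> (a i @ bb t) = qs t i)"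
    by metis
  have bbU: "\<forall>t. set (bb t) \<subseteq> U \<and> length (bb t) = m" using bb by blast
  define a' where "a' s = a (xs (Suc s))" for s
  have a': "\<forall>i. set (a' i) \<subseteq> U \<and> length (a' i) = n" using a by (simp add: a'_def)
  have hb: "holds U F R \<phi> (a' s @ bb t) = (s < t \<longleftrightarrow> v)" for s t
  proof -
    have "holds U F R \<phi> (a' s @ bb t) = qs t (xs (Suc s))" using bb by (simp add: a'_def)
    also have "\<dots> = (if Suc s \<le> t then v else \<not> v)" using X(3) by blast
    finally show ?thesis by (cases v) (auto simp: Suc_le_eq)
  qed
  show False
  proof (cases v)
    case True
    have "\<forall>i j. holds U F R \<phi> (a' i @ bb j) = (i < j)" using hb True by simp
    then have "order_property U F R \<phi> n m" unfolding order_property_def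
      using a' bbU by blast
    then show False using st fv unfolding stable_def by blast
  next
    case False
    have "\<forall>i j. holds U F R (Neg \<phi>) (a' i @ bb j) = (i < j)" using hb False by (simp add: holds_Neg)
    then have "order_property U F R (Neg \<phi>) n m" unfolding order_property_def
      using a' bbU by blast
    moreover have "fv (Neg \<phi>) \<subseteq> {..<n+m}" using fv by simp
    ultimately show False using st unfolding stable_def by blast
  qed
qed

lemma part_ii:
  assumes st: "stable U F R" and fv: "fv \<phi> \<subseteq> {..<n+m}" and a: "\<forall>i. set (a i) \<subseteq> U \<and> length (a i) = n"
    and conv: "\<forall>p\<in>phi_types U F R \<phi> m a. (\<lambda>i. of_bool (p i) :: real) \<longlonglongrightarrow> f p"
  shows "continuous_map (stone_top U F R \<phi> m a) euclideanreal f"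
proof -
  let ?P = "phi_types U F R \<phi> m a"
  let ?X = "stone_top U F R \<phi> m a"
  have top: "topspace ?X = ?P" unfolding stone_top_def by simp
  have opn: "openin ?X {q \<in> ?P. \<forall>i\<le>x. q i = p i}" for x p
  proof -
    define S where "S i = {y. i \<le> x \<longrightarrow> y = p i}" for i
    have o: "openin (product_topology (\<lambda>_. discrete_topology UNIV) UNIV) (PiE UNIV S)"
      unfolding openin_PiE_gen
    proof (rule disjI2, intro conjI)
      show "finite {i \<in> UNIV. S i \<noteq> topspace (discrete_topology UNIV)}"
        by (rule finite_subset[of _ "{..x}"]) (auto simp: S_def)
      show "\<forall>i\<in>UNIV. openin (discrete_topology UNIV) (S i)" by simp
    qed
    have "{q \<in> ?P. \<forall>i\<le>x. q i = p i} = PiE UNIV S \<inter> ?P" by (auto simp: S_def PiE_iff)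
    then show ?thesis unfolding stone_top_def openin_subtopology using o by blast
  qed
  have lc: "\<exists>x. \<forall>q\<in>?P. (\<forall>i\<le>x. q i = p i) \<longrightarrow> f q = f p" if "p \<in> ?P" for p
    by (rule locconst[OF st fv a conv that])
  show ?thesis
    unfolding continuous_map_def
  proof (intro conjI allI impI)
    show "f \<in> topspace ?X \<rightarrow> topspace euclideanreal" by simp
  next
    fix V :: "real set" assume "openin euclideanreal V"
    show "openin ?X {x \<in> topspace ?X. f x \<in> V}"
      unfolding top
    proof (subst openin_subopen, intro ballI)
      fix p assume p: "p \<in> {x \<in> ?P. f x \<in> V}"
      then obtain x where x: "\<forall>q\<in>?P. (\<forall>i\<le>x. q i = p i) \<longrightarrow> f q = f p" using lc by blast
      have "{q \<in> ?P. \<forall>i\<le>x. q i = p i} \<subseteq> {x \<in> ?P. f x \<in> V}"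
      proof (rule subsetI)
        fix q assume "q \<in> {q \<in> ?P. \<forall>i\<le>x. q i = p i}"
        then have q: "q \<in> ?P" "\<forall>i\<le>x. q i = p i" by auto
        then have "f q = f p" using x by blast
        then show "q \<in> {x \<in> ?P. f x \<in> V}" using p q(1) by simp
      qed
      moreover have "p \<in> {q \<in> ?P. \<forall>i\<le>x. q i = p i}" using p by simp
      ultimately show "\<exists>T. openin ?X T \<and> p \<in> T \<and> T \<subseteq> {x \<in> ?P. f x \<in> V}"
        using opn by blast
    qed
  qed
qed

end


context mon
begin

lemma part_i:
  assumes st: "stable U F R" and fv: "fv \<phi> \<subseteq> {..<n+m}" and a: "\<forall>i. set (a i) \<subseteq> U \<and> length (a i) = n"
  shows "\<exists>j :: nat \<Rightarrow> nat. strict_mono j \<and>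
          (\<exists>(N :: nat) (f :: (nat \<Rightarrow> bool) \<Rightarrow> real).
            (\<forall>p\<in>phi_types U F R \<phi> m (a \<circ> j). (\<lambda>i. of_bool (p i)) \<longlonglongrightarrow> f p) \<and>
            (\<forall>b. set b \<subseteq> U \<and> length b = m \<longrightarrow>
               summable (\<lambda>i. \<bar>of_bool (holds U F R \<phi> (a (j (Suc i)) @ b))
                             - of_bool (holds U F R \<phi> (a (j (Suc (Suc i))) @ b)) :: real\<bar>) \<and>
               (\<Sum>i. \<bar>of_bool (holds U F R \<phi> (a (j (Suc i)) @ b))
                     - of_bool (holds U F R \<phi> (a (j (Suc (Suc i))) @ b)) :: real\<bar>) \<le> real N))"
proof -
  obtain K :: nat where K: "\<not>(\<exists>a b. (\<forall>i<K. set (a i) \<subseteq> U \<and> length (a i) = n) \<and>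
      (\<forall>j<K. set (b j) \<subseteq> U \<and> length (b j) = m) \<and>
      (\<forall>i<K. \<forall>j<K. holds U F R \<phi> (a i @ b j) \<longleftrightarrow> i < j))"
    using hg_bound[OF fv st] by blast
  define W where "W X = (\<exists>b. set b \<subseteq> U \<and> length b = m \<and>
      (\<forall>x\<in>X. holds U F R \<phi> (a x @ b) = even (card {y\<in>X. y < x})))" for X :: "nat set"
  define col where "col X = (if W X then 1 else 0::nat)" for X
  have "\<exists>Y t. Y \<subseteq> UNIV \<and> infinite Y \<and> t < 2 \<and> (\<forall>X. X \<subseteq> Y \<and> finite X \<and> card X = 2*K \<longrightarrow> col X = t)"
    by (rule Ramsey[of "UNIV :: nat set" "2*K" col 2]) (auto simp: col_def)
  then obtain Yset t where Y: "infinite Yset" "t < 2"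
    "\<forall>X. X \<subseteq> Yset \<and> finite X \<and> card X = 2*K \<longrightarrow> col X = t" by blast
  define h where "h = enumerate Yset"
  have hY: "h i \<in> Yset" for i unfolding h_def by (rule enumerate_in_set[OF Y(1)])
  have hmono: "strict_mono h" unfolding strict_mono_def h_def using enumerate_mono[OF _ Y(1)] by blast
  have colY: "col (g ` {..<2*K}) = t"
    if g: "\<forall>r r'. r < r' \<longrightarrow> r' < 2*K \<longrightarrow> g r < g r'" and gY: "\<forall>r<2*K. g r \<in> Yset" for g
  proof -
    have "g ` {..<2*K} \<subseteq> Yset" using gY by auto
    moreover have "card (g ` {..<2*K}) = 2*K" by (rule rank_image(1)[OF g])
    ultimately show ?thesis using Y(3) by simp
  qed
  have Wiff: "W (g ` {..<2*K}) \<longleftrightarrow> (\<exists>b. set b \<subseteq> U \<and> length b = m \<and>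
      (\<forall>r<2*K. holds U F R \<phi> (a (g r) @ b) = even r))"
    if g: "\<forall>r r'. r < r' \<longrightarrow> r' < 2*K \<longrightarrow> g r < g r'" for g
  proof -
    have rk: "card {y \<in> g ` {..<2*K}. y < g r} = r" if "r < 2*K" for r
      by (rule rank_image(2)[OF g that])
    have "(\<forall>x\<in>g ` {..<2*K}. holds U F R \<phi> (a x @ b) = even (card {y\<in>g ` {..<2*K}. y < x}))
       \<longleftrightarrow> (\<forall>r<2*K. holds U F R \<phi> (a (g r) @ b) = even r)" for b
      using rk by auto
    then show ?thesis unfolding W_def by simp
  qed
  show ?thesis
  proof (cases "t = 1")
    case True
    define idx where "idx t' r = 4*(r div 2) + 1 + (if r div 2 < t' then 1 else 0) + (if even r then 0 else 1)"
      for t' r :: nat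
    have idxm: "idx t' r < idx t' r'" if "r < r'" for t' r r'
    proof -
      have q: "r div 2 \<le> r' div 2" using that by (simp add: div_le_mono)
      show ?thesis
      proof (cases "r div 2 = r' div 2")
        case True
        then have "even r" "odd r'" using \<open>r < r'\<close> by presburger+
        then show ?thesis using True by (simp add: idx_def)
      next
        case False
        then have "r div 2 < r' div 2" using q by simp
        moreover have "idx t' r \<le> 4*(r div 2)+3" "4*(r' div 2)+1 \<le> idx t' r'" by (simp_all add: idx_def)
        ultimately show ?thesis by linarith
      qed
    qed
    have ex: "\<exists>b. set b \<subseteq> U \<and> length b = m \<and> (\<forall>r<2*K. holds U F R \<phi> (a (h (idx t' r)) @ b) = even r)"
      for t'
    proof -
      have g: "\<forall>r r'. r < r' \<longrightarrow> r' < 2*K \<longrightarrow> (h \<circ> idx t') r < (h \<circ> idx t') r'"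
        using idxm hmono by (simp add: strict_mono_less)
      have "col ((h \<circ> idx t') ` {..<2*K}) = t" by (rule colY[OF g]) (simp add: hY)
      then have c1: "col ((h \<circ> idx t') ` {..<2*K}) = 1" using True by (simp only:)
      have "W ((h \<circ> idx t') ` {..<2*K})"
      proof (rule ccontr)
        assume "\<not> W ((h \<circ> idx t') ` {..<2*K})"
        then have "col ((h \<circ> idx t') ` {..<2*K}) = 0" unfolding col_def by (simp only: if_False)
        then show False using c1 by simp
      qed
      then show ?thesis using Wiff[OF g] by simp
    qed
    then obtain bb where bb: "\<forall>t'. set (bb t') \<subseteq> U \<and> length (bb t') = m \<and>
        (\<forall>r<2*K. holds U F R \<phi> (a (h (idx t' r)) @ bb t') = even r)" by metis
    define c where "c s = a (h (4 * s+2))" for s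
    have hg: "holds U F R \<phi> (c s @ bb t') \<longleftrightarrow> s < t'" if "s < K" "t' < K" for s t'
    proof (cases "s < t'")
      case True
      have "idx t' (2 * s) = 4 * s+2" using True by (simp add: idx_def)
      moreover have "2 * s < 2*K" using that by simp
      ultimately have "holds U F R \<phi> (c s @ bb t') = even (2 * s)" using bb by (metis c_def)
      then show ?thesis using True by simp
    next
      case False
      have "idx t' (2 * s+1) = 4 * s+2" using False by (simp add: idx_def)
      moreover have "2 * s+1 < 2*K" using that by simp
      ultimately have "holds U F R \<phi> (c s @ bb t') = even (2 * s+1)" using bb by (metis c_def)
      then show ?thesis using False by simp
    qed
    have "\<exists>a b. (\<forall>i<K. set (a i) \<subseteq> U \<and> length (a i) = n) \<and>
      (\<forall>j<K. set (b j) \<subseteq> U \<and> length (b j) = m) \<and>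
      (\<forall>i<K. \<forall>j<K. holds U F R \<phi> (a i @ b j) \<longleftrightarrow> i < j)"
      by (rule exI[of _ c], rule exI[of _ bb]) (use a bb hg in \<open>auto simp: c_def\<close>)
    then show ?thesis using K by blast
  next
    case False
    then have t0: "t = 0" using Y(2) by simp
    define f where "f p = lim (\<lambda>i. of_bool (p i) :: real)" for p :: "nat \<Rightarrow> bool"
    define w where "w b i = holds U F R \<phi> (a (h (Suc i)) @ b)" for b i
    define D where "D b = {i. w b i \<noteq> w b (Suc i)}" for b
    have bnd: "finite (D b) \<and> card (D b) \<le> 2*K" if b: "set b \<subseteq> U" "length b = m" for b
    proof (rule ccontr)
      assume nb: "\<not> (finite (D b) \<and> card (D b) \<le> 2*K)"
      obtain D' where D': "finite D'" "D' \<subseteq> D b" "Suc (2*K) \<le> card D'"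
      proof (cases "finite (D b)")
        case True then show ?thesis using nb that[of "D b"] by auto
      next
        case False
        obtain B where "finite B" "card B = Suc (2*K)" "B \<subseteq> D b"
          using infinite_arbitrarily_large[OF False] by blast
        then show ?thesis using that[of B] by auto
      qed
      have "\<forall>d\<in>D'. 0 \<le> d \<and> w b d \<noteq> w b (Suc d)" using D'(2) by (auto simp: D_def)
      from alt[OF D'(1) D'(3) this] obtain ps where ps: "length ps = Suc (Suc (2*K))"
        "\<forall>r r'. r < r' \<longrightarrow> r' < Suc (Suc (2*K)) \<longrightarrow> ps!r < ps!r'"
        "\<forall>r<Suc (Suc (2*K)). w b (ps!r) = (if even r then w b 0 else \<not> w b 0)" by blast
      define off where "off = (if w b 0 then 0 else 1::nat)"
      define g where "g r = h (Suc (ps ! (r + off)))" for r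
      have g: "\<forall>r r'. r < r' \<longrightarrow> r' < 2*K \<longrightarrow> g r < g r'"
      proof (intro allI impI)
        fix r r' :: nat assume "r < r'" "r' < 2*K"
        then have "ps ! (r + off) < ps ! (r' + off)" using ps(2) by (auto simp: off_def)
        then show "g r < g r'" unfolding g_def using hmono by (simp add: strict_mono_less)
      qed
      have "\<exists>b'. set b' \<subseteq> U \<and> length b' = m \<and> (\<forall>r<2*K. holds U F R \<phi> (a (g r) @ b') = even r)"
      proof (rule exI[of _ b], intro conjI allI impI)
        show "set b \<subseteq> U" "length b = m" by (fact b)+
        fix r assume "r < 2*K"
        then have "r + off < Suc (Suc (2*K))" by (simp add: off_def)
        then have "w b (ps ! (r + off)) = (if even (r + off) then w b 0 else \<not> w b 0)" using ps(3) by blast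
        then show "holds U F R \<phi> (a (g r) @ b) = even r"
          by (cases "w b 0") (auto simp: g_def w_def off_def)
      qed
      then have "W (g ` {..<2*K})" using Wiff[OF g] by simp
      then have "col (g ` {..<2*K}) = 1" unfolding col_def by (simp only: if_True)
      moreover have "col (g ` {..<2*K}) = t" by (rule colY[OF g]) (simp add: g_def hY)
      ultimately show False using t0 by simp
    qed
    have evc: "w b i = w b M" if "finite (D b)" "M = Suc (Max (insert 0 (D b)))" "M \<le> i" for b M i
    proof -
      have "w b (M + k) = w b M" for k
      proof (induction k)
        case 0 then show ?case by simp
      next
        case (Suc k)
        have "M + k \<notin> D b"
        proof
          assume "M + k \<in> D b"
          then have "M + k \<le> Max (insert 0 (D b))" using that(1) by simp
          then show False using that(2) by simp
        qed
        then have "w b (Suc (M + k)) = w b (M + k)" by (simp add: D_def)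
        then show ?case using Suc.IH by simp
      qed
      from this[of "i - M"] show ?thesis using that(3) by simp
    qed
    show ?thesis
    proof (rule exI[of _ h], intro conjI exI[of _ "2*K"] exI[of _ f])
      show "strict_mono h" by (fact hmono)
    next
      show "\<forall>p\<in>phi_types U F R \<phi> m (a \<circ> h). (\<lambda>i. of_bool (p i)) \<longlonglongrightarrow> f p"
      proof
        fix p assume p: "p \<in> phi_types U F R \<phi> m (a \<circ> h)"
        have ah: "\<forall>i. set ((a \<circ> h) i) \<subseteq> U \<and> length ((a \<circ> h) i) = n" using a by simp
        obtain b where b: "set b \<subseteq> U" "length b = m" "\<forall>i. holds U F R \<phi> ((a \<circ> h) i @ b) = p i"
          using realize[OF fv ah p] by blast
        define M where "M = Suc (Max (insert 0 (D b)))"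
        have fin: "finite (D b)" using bnd[OF b(1,2)] by blast
        have pw: "p (Suc i) = w b i" for i using b(3) by (simp add: w_def)
        have "(\<lambda>i. of_bool (p i) :: real) \<longlonglongrightarrow> of_bool (w b M)"
        proof (rule Lim_transform_eventually[OF tendsto_const])
          show "\<forall>\<^sub>F i in sequentially. of_bool (w b M) = (of_bool (p i) :: real)"
            unfolding eventually_sequentially
          proof (intro exI allI impI)
            fix i assume "Suc M \<le> i"
            then obtain i' where i': "i = Suc i'" "M \<le> i'" by (cases i) auto
            have "w b i' = w b M" by (rule evc[OF fin M_def i'(2)])
            then show "of_bool (w b M) = (of_bool (p i) :: real)" using pw i'(1) by simp
          qed
        qed
        then have "convergent (\<lambda>i. of_bool (p i) :: real)" by (rule convergentI)
        then show "(\<lambda>i. of_bool (p i)) \<longlonglongrightarrow> f p" unfolding f_def by (simp add: convergent_LIMSEQ_iff)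
      qed
    next
      show "\<forall>b. set b \<subseteq> U \<and> length b = m \<longrightarrow>
               summable (\<lambda>i. \<bar>of_bool (holds U F R \<phi> (a (h (Suc i)) @ b))
                             - of_bool (holds U F R \<phi> (a (h (Suc (Suc i))) @ b)) :: real\<bar>) \<and>
               (\<Sum>i. \<bar>of_bool (holds U F R \<phi> (a (h (Suc i)) @ b))
                     - of_bool (holds U F R \<phi> (a (h (Suc (Suc i))) @ b)) :: real\<bar>) \<le> real (2*K)"
      proof (intro allI impI)
        fix b assume "set b \<subseteq> U \<and> length b = m"
        then have fin: "finite (D b)" and cd: "card (D b) \<le> 2*K" using bnd by blast+
        have eq: "(\<lambda>i. \<bar>of_bool (holds U F R \<phi> (a (h (Suc i)) @ b))
                     - of_bool (holds U F R \<phi> (a (h (Suc (Suc i))) @ b)) :: real\<bar>)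
               = (\<lambda>i. of_bool (i \<in> D b))"
          by (rule ext) (simp add: abs_of_bool_diff D_def w_def)
        have z: "of_bool (i \<in> D b) = (0::real)" if "i \<notin> D b" for i using that by simp
        have "summable (\<lambda>i. of_bool (i \<in> D b) :: real)" by (rule summable_finite[OF fin z])
        moreover have "(\<Sum>i. of_bool (i \<in> D b) :: real) = (\<Sum>i\<in>D b. of_bool (i \<in> D b))"
          by (rule suminf_finite[OF fin z])
        moreover have "(\<Sum>i\<in>D b. of_bool (i \<in> D b) :: real) = real (card (D b))" by simp
        ultimately show "summable (\<lambda>i. \<bar>of_bool (holds U F R \<phi> (a (h (Suc i)) @ b))
                             - of_bool (holds U F R \<phi> (a (h (Suc (Suc i))) @ b)) :: real\<bar>) \<and>
               (\<Sum>i. \<bar>of_bool (holds U F R \<phi> (a (h (Suc i)) @ b))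
                     - of_bool (holds U F R \<phi> (a (h (Suc (Suc i))) @ b)) :: real\<bar>) \<le> real (2*K)"
          unfolding eq using cd by simp
      qed
    qed
  qed
qed

end


theorem corollary2p15:
  fixes U :: "'u set" and F :: "'f \<Rightarrow> 'u list \<Rightarrow> 'u" and R :: "'r \<Rightarrow> 'u list \<Rightarrow> bool"
    and T :: "('f, 'r) fm set"
  assumes "complete_theory T" and "monster U F R T"
  shows "stable U F R \<longleftrightarrow>
    ((\<forall>\<phi> n m (a :: nat \<Rightarrow> 'u list).
        fv \<phi> \<subseteq> {..< n + m} \<and> (\<forall>i. set (a i) \<subseteq> U \<and> length (a i) = n) \<longrightarrow>
        (\<exists>j :: nat \<Rightarrow> nat. strict_mono j \<and>
          (\<exists>(N :: nat) (f :: (nat \<Rightarrow> bool) \<Rightarrow> real).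
            (\<forall>p\<in>phi_types U F R \<phi> m (a \<circ> j). (\<lambda>i. of_bool (p i)) \<longlonglongrightarrow> f p) \<and>
            (\<forall>b. set b \<subseteq> U \<and> length b = m \<longrightarrow>
               summable (\<lambda>i. \<bar>of_bool (holds U F R \<phi> (a (j (Suc i)) @ b))
                             - of_bool (holds U F R \<phi> (a (j (Suc (Suc i))) @ b)) :: real\<bar>) \<and>
               (\<Sum>i. \<bar>of_bool (holds U F R \<phi> (a (j (Suc i)) @ b))
                     - of_bool (holds U F R \<phi> (a (j (Suc (Suc i))) @ b)) :: real\<bar>) \<le> real N))))
     \<and>
     (\<forall>\<phi> n m (a :: nat \<Rightarrow> 'u list) (f :: (nat \<Rightarrow> bool) \<Rightarrow> real).
        fv \<phi> \<subseteq> {..< n + m} \<and> (\<forall>i. set (a i) \<subseteq> U \<and> length (a i) = n) \<and>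
        (\<forall>p\<in>phi_types U F R \<phi> m a. (\<lambda>i. of_bool (p i)) \<longlonglongrightarrow> f p) \<and>
        (\<exists>N :: nat. \<forall>b. set b \<subseteq> U \<and> length b = m \<longrightarrow>
               summable (\<lambda>i. \<bar>of_bool (holds U F R \<phi> (a (Suc i) @ b))
                             - of_bool (holds U F R \<phi> (a (Suc (Suc i)) @ b)) :: real\<bar>) \<and>
               (\<Sum>i. \<bar>of_bool (holds U F R \<phi> (a (Suc i) @ b))
                     - of_bool (holds U F R \<phi> (a (Suc (Suc i)) @ b)) :: real\<bar>) \<le> real N)
        \<longrightarrow> continuous_map (stone_top U F R \<phi> m a) euclideanreal f))"
    (is "_ \<longleftrightarrow> (?I \<and> ?II)")
proof -
  interpret mon U F R T by unfold_locales (rule assms(2))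
  show ?thesis
  proof
    assume st: "stable U F R"
    show "?I \<and> ?II"
    proof (intro conjI allI impI)
      fix \<phi> :: "('f, 'r) fm" and n m :: nat and a :: "nat \<Rightarrow> 'u list"
      assume h: "fv \<phi> \<subseteq> {..< n + m} \<and> (\<forall>i. set (a i) \<subseteq> U \<and> length (a i) = n)"
      show "\<exists>j :: nat \<Rightarrow> nat. strict_mono j \<and>
          (\<exists>(N :: nat) (f :: (nat \<Rightarrow> bool) \<Rightarrow> real).
            (\<forall>p\<in>phi_types U F R \<phi> m (a \<circ> j). (\<lambda>i. of_bool (p i)) \<longlonglongrightarrow> f p) \<and>
            (\<forall>b. set b \<subseteq> U \<and> length b = m \<longrightarrow>
               summable (\<lambda>i. \<bar>of_bool (holds U F R \<phi> (a (j (Suc i)) @ b))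
                             - of_bool (holds U F R \<phi> (a (j (Suc (Suc i))) @ b)) :: real\<bar>) \<and>
               (\<Sum>i. \<bar>of_bool (holds U F R \<phi> (a (j (Suc i)) @ b))
                     - of_bool (holds U F R \<phi> (a (j (Suc (Suc i))) @ b)) :: real\<bar>) \<le> real N))"
        by (rule part_i[OF st conjunct1[OF h] conjunct2[OF h]])
    next
      fix \<phi> :: "('f, 'r) fm" and n m :: nat and a :: "nat \<Rightarrow> 'u list" and f :: "(nat \<Rightarrow> bool) \<Rightarrow> real"
      assume h: "fv \<phi> \<subseteq> {..< n + m} \<and> (\<forall>i. set (a i) \<subseteq> U \<and> length (a i) = n) \<and>
        (\<forall>p\<in>phi_types U F R \<phi> m a. (\<lambda>i. of_bool (p i)) \<longlonglongrightarrow> f p) \<and>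
        (\<exists>N :: nat. \<forall>b. set b \<subseteq> U \<and> length b = m \<longrightarrow>
               summable (\<lambda>i. \<bar>of_bool (holds U F R \<phi> (a (Suc i) @ b))
                             - of_bool (holds U F R \<phi> (a (Suc (Suc i)) @ b)) :: real\<bar>) \<and>
               (\<Sum>i. \<bar>of_bool (holds U F R \<phi> (a (Suc i) @ b))
                     - of_bool (holds U F R \<phi> (a (Suc (Suc i)) @ b)) :: real\<bar>) \<le> real N)"
      show "continuous_map (stone_top U F R \<phi> m a) euclideanreal f"
        by (rule part_ii[OF st conjunct1[OF h] conjunct1[OF conjunct2[OF h]]
              conjunct1[OF conjunct2[OF conjunct2[OF h]]]])
    qed
  next
    assume h: "?I \<and> ?II"
    have hI: ?I using h by (rule conjunct1)
    have hII: ?II using h by (rule conjunct2)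
    show "stable U F R" unfolding stable_def
    proof
      assume "\<exists>\<phi> n m. fv \<phi> \<subseteq> {..<n + m} \<and> order_property U F R \<phi> n m"
      then obtain \<phi> :: "('f, 'r) fm" and n m :: nat where fv: "fv \<phi> \<subseteq> {..<n + m}"
        and op: "order_property U F R \<phi> n m" by blast
      from op obtain a b :: "nat \<Rightarrow> 'u list" where ab: "\<forall>i. set (a i) \<subseteq> U \<and> length (a i) = n"
        "\<forall>j. set (b j) \<subseteq> U \<and> length (b j) = m" "\<forall>i j. holds U F R \<phi> (a i @ b j) \<longleftrightarrow> i < j"
        unfolding order_property_def by blast
      from hI[rule_format, OF conjI[OF fv ab(1)]] obtain j :: "nat \<Rightarrow> nat" and N :: nat
        and f :: "(nat \<Rightarrow> bool) \<Rightarrow> real" where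
        j: "strict_mono j" and cv: "\<forall>p\<in>phi_types U F R \<phi> m (a \<circ> j). (\<lambda>i. of_bool (p i)) \<longlonglongrightarrow> f p"
        and sm: "\<forall>b. set b \<subseteq> U \<and> length b = m \<longrightarrow>
               summable (\<lambda>i. \<bar>of_bool (holds U F R \<phi> (a (j (Suc i)) @ b))
                             - of_bool (holds U F R \<phi> (a (j (Suc (Suc i))) @ b)) :: real\<bar>) \<and>
               (\<Sum>i. \<bar>of_bool (holds U F R \<phi> (a (j (Suc i)) @ b))
                     - of_bool (holds U F R \<phi> (a (j (Suc (Suc i))) @ b)) :: real\<bar>) \<le> real N"
        by blast
      have aj: "\<forall>i. set ((a \<circ> j) i) \<subseteq> U \<and> length ((a \<circ> j) i) = n" using ab(1) by simp
      have sm': "\<exists>N :: nat. \<forall>b. set b \<subseteq> U \<and> length b = m \<longrightarrow>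
               summable (\<lambda>i. \<bar>of_bool (holds U F R \<phi> ((a \<circ> j) (Suc i) @ b))
                             - of_bool (holds U F R \<phi> ((a \<circ> j) (Suc (Suc i)) @ b)) :: real\<bar>) \<and>
               (\<Sum>i. \<bar>of_bool (holds U F R \<phi> ((a \<circ> j) (Suc i) @ b))
                     - of_bool (holds U F R \<phi> ((a \<circ> j) (Suc (Suc i)) @ b)) :: real\<bar>) \<le> real N"
        unfolding comp_apply by (rule exI[of _ N], rule sm)
      have cont: "continuous_map (stone_top U F R \<phi> m (a \<circ> j)) euclideanreal f"
        using hII[rule_format, OF conjI[OF fv conjI[OF aj conjI[OF cv sm']]]] .
      define P where "P = phi_types U F R \<phi> m (a \<circ> j)"
      define pk where "pk k = (\<lambda>i::nat. i < k)" for k :: nat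
      define pinf where "pinf = (\<lambda>i::nat. True)"
      have hj: "holds U F R \<phi> ((a \<circ> j) i @ b (j k)) = (i < k)" for i k
        using ab(3) j by (simp add: strict_mono_less)
      have pkP: "pk k \<in> P" for k
        unfolding P_def phi_types_def
      proof (intro CollectI allI impI)
        fix I :: "nat set" assume "finite I"
        show "\<exists>b'. set b' \<subseteq> U \<and> length b' = m \<and> (\<forall>i\<in>I. holds U F R \<phi> ((a \<circ> j) i @ b') = pk k i)"
          by (rule exI[of _ "b (j k)"]) (use ab(2) hj in \<open>simp add: pk_def\<close>)
      qed
      have pinfP: "pinf \<in> P"
        unfolding P_def phi_types_def
      proof (intro CollectI allI impI)
        fix I :: "nat set" assume fI: "finite I"
        define k where "k = Suc (Max (insert 0 I))"
        have ik: "i < k" if "i \<in> I" for i unfolding k_def using fI that by (simp add: le_imp_less_Suc)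
        show "\<exists>b'. set b' \<subseteq> U \<and> length b' = m \<and> (\<forall>i\<in>I. holds U F R \<phi> ((a \<circ> j) i @ b') = pinf i)"
          by (rule exI[of _ "b (j k)"]) (use ab(2) hj ik in \<open>simp add: pinf_def\<close>)
      qed
      have fpk: "f (pk k) = 0" for k
      proof -
        have l1: "(\<lambda>i. of_bool (pk k i) :: real) \<longlonglongrightarrow> f (pk k)" using cv pkP unfolding P_def by blast
        have l2: "(\<lambda>i. of_bool (pk k i) :: real) \<longlonglongrightarrow> 0"
        proof (rule Lim_transform_eventually[OF tendsto_const])
          show "\<forall>\<^sub>F i in sequentially. (0::real) = of_bool (pk k i)"
            unfolding eventually_sequentially by (rule exI[of _ k]) (simp add: pk_def)
        qed
        show ?thesis using LIMSEQ_unique[OF l1 l2] .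
      qed
      have fpinf: "f pinf = 1"
      proof -
        have l1: "(\<lambda>i. of_bool (pinf i) :: real) \<longlonglongrightarrow> f pinf" using cv pinfP unfolding P_def by blast
        then have "(\<lambda>i. 1 :: real) \<longlonglongrightarrow> f pinf" by (simp add: pinf_def)
        then show ?thesis using LIMSEQ_unique[OF _ tendsto_const] by metis
      qed
      have lim: "limitin (stone_top U F R \<phi> m (a \<circ> j)) pk pinf sequentially"
        unfolding stone_top_def limitin_subtopology
      proof (intro conjI)
        show "pinf \<in> phi_types U F R \<phi> m (a \<circ> j)" using pinfP unfolding P_def .
        show "\<forall>\<^sub>F k in sequentially. pk k \<in> phi_types U F R \<phi> m (a \<circ> j)"
          using pkP unfolding P_def by simp
        show "limitin (product_topology (\<lambda>_. discrete_topology UNIV) UNIV) pk pinf sequentially"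
          unfolding limitin_componentwise
        proof (intro conjI ballI)
          show "pinf \<in> extensional UNIV" by simp
          show "\<forall>\<^sub>F k in sequentially. pk k \<in> topspace (product_topology (\<lambda>_. discrete_topology UNIV) UNIV)"
            by simp
        next
          fix i :: nat assume "i \<in> UNIV"
          show "limitin (discrete_topology UNIV) (\<lambda>c. pk c i) (pinf i) sequentially"
            unfolding limitin_def
          proof (intro conjI allI impI)
            show "pinf i \<in> topspace (discrete_topology UNIV)" by simp
          next
            fix V assume "openin (discrete_topology UNIV) V \<and> pinf i \<in> V"
            then have "True \<in> V" by (simp add: pinf_def)
            then show "\<forall>\<^sub>F c in sequentially. pk c i \<in> V"
              unfolding eventually_sequentially by (intro exI[of _ "Suc i"]) (simp add: pk_def)
          qed
        qed
      qed
      have "limitin euclideanreal (f \<circ> pk) (f pinf) sequentially"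
        by (rule continuous_map_limit[OF cont lim])
      then have "(\<lambda>k. f (pk k)) \<longlonglongrightarrow> 1" using fpinf by (simp add: comp_def)
      then have "(\<lambda>k. 0 :: real) \<longlonglongrightarrow> 1" using fpk by simp
      then show False using LIMSEQ_unique[OF tendsto_const] by fastforce
    qed
  qed
qed

end
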